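(* Let $E$ be a complex Banach lattice, $A$ the set of all positive atoms of $E$ of norm one, $E_A=A^{dd}$, $E_{A^d}=A^d$, and let $T\in Z(E)$ be such that its restriction $T_A$ to $E_A$ is compact. Then there exist $T_1,T_2\in Z(E)$ with $T_1$ compact such that $T=T_1+T_2$, the restriction of $T_1$ to $E_A$ equals $T_A$, and the restriction of $T_2$ to $E_{A^d}$ equals the restriction $T_{A^d}$ of $T$ to $E_{A^d}$. *)

theory Defs
  imports "HOL-Analysis.Analysis"
begin

class real_banach_lattice = banach + ordered_real_vector + lattice +
  assumes lattice_norm_mono:
    "sup x (- x) \<le> sup y (- y) \<Longrightarrow> norm x \<le> norm y"

definition labs :: "'a::real_banach_lattice \<Rightarrow> 'a" where
  "labs x = sup x (- x)"

section \<open>The complexification E = E_R + i E_R, represented by pairs (x, y) = x + i y\<close>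

definition cmul :: "complex \<Rightarrow> 'a::real_banach_lattice \<times> 'a \<Rightarrow> 'a \<times> 'a" where
  "cmul c z = (Re c *\<^sub>R fst z - Im c *\<^sub>R snd z, Im c *\<^sub>R fst z + Re c *\<^sub>R snd z)"

definition cabs :: "'a::real_banach_lattice \<times> 'a \<Rightarrow> 'a" where
  "cabs z = (THE u. (\<forall>\<theta>::real. cos \<theta> *\<^sub>R fst z + sin \<theta> *\<^sub>R snd z \<le> u) \<and>
                    (\<forall>v. (\<forall>\<theta>::real. cos \<theta> *\<^sub>R fst z + sin \<theta> *\<^sub>R snd z \<le> v) \<longrightarrow> u \<le> v))"

definition cnorm :: "'a::real_banach_lattice \<times> 'a \<Rightarrow> real" where
  "cnorm z = norm (cabs z)"

definition real_center :: "('a::real_banach_lattice \<Rightarrow> 'a) set" where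
  "real_center = {S. linear S \<and>
      (\<exists>c::real. \<forall>x. 0 \<le> x \<longrightarrow> - (c *\<^sub>R x) \<le> S x \<and> S x \<le> c *\<^sub>R x)}"

definition center :: "('a::real_banach_lattice \<times> 'a \<Rightarrow> 'a \<times> 'a) set" where
  "center = {T. \<exists>S1 \<in> real_center. \<exists>S2 \<in> real_center.
      \<forall>x y. T (x, y) = (S1 x - S2 y, S2 x + S1 y)}"

definition norm_one_pos_atoms :: "('a::real_banach_lattice \<times> 'a) set" where
  "norm_one_pos_atoms = {a. snd a = 0 \<and> 0 < fst a \<and>
      (\<forall>v. 0 \<le> v \<and> v \<le> fst a \<longrightarrow> (\<exists>r::real. v = r *\<^sub>R fst a)) \<and> cnorm a = 1}"

definition disj_compl :: "('a::real_banach_lattice \<times> 'a) set \<Rightarrow> ('a \<times> 'a) set" where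
  "disj_compl S = {z. \<forall>w\<in>S. inf (cabs z) (cabs w) = 0}"

text \<open>An operator T on E restricted to the subset F is compact: the image of the
  unit ball of F is relatively compact.  (The topology on pairs is the product
  topology, which agrees with the topology of cnorm, since the norms are equivalent.)\<close>
definition compact_on :: "('a::real_banach_lattice \<times> 'a \<Rightarrow> 'a \<times> 'a) \<Rightarrow> ('a \<times> 'a) set \<Rightarrow> bool" where
  "compact_on T F \<longleftrightarrow> compact (closure (T ` {z \<in> F. cnorm z \<le> 1}))"

end

theory Submission
  imports Defs "HOL-Library.Lattice_Algebras"
begin

context real_banach_lattice
begin
subclass lattice_ab_group_add ..
end

lemma pos_neg: "(x::'a::real_banach_lattice) = sup x 0 - sup (-x) 0"
proof -
  have e1: "x + 0 = sup x 0 + inf x 0" by (rule add_eq_inf_sup)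
  have e2: "inf x 0 = - sup (-x) 0" using inf_eq_neg_sup[of x 0] by simp
  from e1 e2 show ?thesis by (metis add_0_right diff_conv_add_uminus)
qed

lemma sup_neg_nonneg: "0 \<le> sup (x::'a::real_banach_lattice) (-x)"
proof -
  have "x + (-x) \<le> sup x (-x) + sup x (-x)" by (intro add_mono) auto
  thus ?thesis by simp
qed

lemma labs_def2: "labs (x::'a::real_banach_lattice) = sup x 0 + sup (-x) 0"
proof -
  have "sup x 0 + sup (-x) 0 = sup (x + sup (-x) 0) (sup (-x) 0)"
    by (simp add: add_sup_distrib_right)
  also have "x + sup (-x) 0 = sup 0 x" by (simp add: add_sup_distrib_left)
  also have "sup (sup 0 x) (sup (-x) 0) = sup 0 (sup x (-x))"
    by (simp add: sup_assoc sup_commute sup_left_commute)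
  also have "sup 0 (sup x (-x)) = sup x (-x)" by (rule sup_absorb2[OF sup_neg_nonneg])
  finally show ?thesis by (simp add: labs_def)
qed

lemma labs_nonneg: "0 \<le> labs (x::'a::real_banach_lattice)"
  unfolding labs_def by (rule sup_neg_nonneg)

lemma le_labs: "(x::'a::real_banach_lattice) \<le> labs x" and neg_le_labs: "- (x::'a::real_banach_lattice) \<le> labs x"
  unfolding labs_def by auto

lemma labs_le_iff: "labs (x::'a::real_banach_lattice) \<le> v \<longleftrightarrow> x \<le> v \<and> - x \<le> v"
  unfolding labs_def by auto

lemma labs_minus: "labs (- (x::'a::real_banach_lattice)) = labs x"
  unfolding labs_def by (simp add: sup.commute)

lemma labs_pos: "0 \<le> (x::'a::real_banach_lattice) \<Longrightarrow> labs x = x"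
  unfolding labs_def
  by (metis neg_le_0_iff_le order_trans sup.absorb1)

lemma labs_labs: "labs (labs (x::'a::real_banach_lattice)) = labs x"
  by (rule labs_pos[OF labs_nonneg])

lemma labs_zero_iff: "labs (x::'a::real_banach_lattice) = 0 \<longleftrightarrow> x = 0"
proof
  assume "labs x = 0"
  hence h1: "x \<le> 0" and h2: "- x \<le> 0" using le_labs[of x] neg_le_labs[of x] by auto
  from h2 have "0 \<le> x" by (simp only: neg_le_0_iff_le)
  with h1 show "x = 0" by (rule order_antisym)
qed (simp add: labs_def)

lemma labs_0[simp]: "labs (0::'a::real_banach_lattice) = 0" by (simp add: labs_def)

lemma labs_triangle: "labs ((x::'a::real_banach_lattice) + y) \<le> labs x + labs y"
  unfolding labs_le_iff
  using le_labs neg_le_labs add_mono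
  by (metis minus_add_distrib add.commute)

lemma labs_diff: "labs ((x::'a::real_banach_lattice) - y) \<le> labs x + labs y"
  using labs_triangle[of x "-y"] labs_minus[of y] by simp

lemma labs_commute_diff: "labs ((x::'a::real_banach_lattice) - y) = labs (y - x)"
  using labs_minus[of "x - y"] by simp

lemma scaleR_sup_distrib:
  assumes "0 \<le> c"
  shows "c *\<^sub>R sup (a::'a::real_banach_lattice) b = sup (c *\<^sub>R a) (c *\<^sub>R b)"
proof (cases "c = 0")
  case True thus ?thesis by (simp add: sup.idem)
next
  case False
  hence cpos: "0 < c" using assms by simp
  show ?thesis
  proof (rule order_antisym)
    show "sup (c *\<^sub>R a) (c *\<^sub>R b) \<le> c *\<^sub>R sup a b"
      using assms by (simp add: scaleR_left_mono)
    have "sup a b \<le> (1/c) *\<^sub>R sup (c *\<^sub>R a) (c *\<^sub>R b)"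
    proof -
      have "a = (1/c) *\<^sub>R (c *\<^sub>R a)" "b = (1/c) *\<^sub>R (c *\<^sub>R b)" using cpos by auto
      moreover have "(1/c) *\<^sub>R (c *\<^sub>R a) \<le> (1/c) *\<^sub>R sup (c *\<^sub>R a) (c *\<^sub>R b)"
        using cpos by (intro scaleR_left_mono) auto
      moreover have "(1/c) *\<^sub>R (c *\<^sub>R b) \<le> (1/c) *\<^sub>R sup (c *\<^sub>R a) (c *\<^sub>R b)"
        using cpos by (intro scaleR_left_mono) auto
      ultimately show ?thesis by (metis sup_least)
    qed
    hence "c *\<^sub>R sup a b \<le> c *\<^sub>R ((1/c) *\<^sub>R sup (c *\<^sub>R a) (c *\<^sub>R b))"
      using cpos by (intro scaleR_left_mono) auto
    thus "c *\<^sub>R sup a b \<le> sup (c *\<^sub>R a) (c *\<^sub>R b)" using cpos by simp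
  qed
qed

lemma scaleR_inf_distrib:
  assumes "0 \<le> c"
  shows "c *\<^sub>R inf (a::'a::real_banach_lattice) b = inf (c *\<^sub>R a) (c *\<^sub>R b)"
proof -
  have e: "inf a b = - sup (-a) (-b)" by (rule inf_eq_neg_sup)
  have "c *\<^sub>R inf a b = - (c *\<^sub>R sup (-a) (-b))" by (subst e) (rule scaleR_minus_right)
  also have "\<dots> = - sup (c *\<^sub>R (-a)) (c *\<^sub>R (-b))" by (subst scaleR_sup_distrib[OF assms]) (rule refl)
  also have "\<dots> = - sup (- (c *\<^sub>R a)) (- (c *\<^sub>R b))" by simp
  also have "\<dots> = inf (c *\<^sub>R a) (c *\<^sub>R b)" by (rule inf_eq_neg_sup[symmetric])
  finally show ?thesis .
qed

lemma labs_scaleR: "labs (c *\<^sub>R (x::'a::real_banach_lattice)) = \<bar>c\<bar> *\<^sub>R labs x"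
proof (cases "0 \<le> c")
  case True
  thus ?thesis unfolding labs_def using scaleR_sup_distrib[OF True, of x "-x"] by simp
next
  case False
  hence "0 \<le> -c" by simp
  have "labs (c *\<^sub>R x) = labs ((-c) *\<^sub>R x)" using labs_minus[of "c *\<^sub>R x"] by simp
  also have "\<dots> = (-c) *\<^sub>R labs x"
    unfolding labs_def using scaleR_sup_distrib[OF \<open>0 \<le> -c\<close>, of x "-x"] by simp
  finally show ?thesis using False by simp
qed

lemma scaleR_le_labs: "c *\<^sub>R (x::'a::real_banach_lattice) \<le> \<bar>c\<bar> *\<^sub>R labs x"
  using le_labs[of "c *\<^sub>R x"] labs_scaleR[of c x] by simp

lemma norm_labs_mono: "labs (x::'a::real_banach_lattice) \<le> labs y \<Longrightarrow> norm x \<le> norm y"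
  unfolding labs_def by (rule lattice_norm_mono)

lemma norm_labs: "norm (labs (x::'a::real_banach_lattice)) = norm x"
  by (rule order_antisym; rule norm_labs_mono; simp add: labs_labs)

lemma norm_mono_pos: "0 \<le> (u::'a::real_banach_lattice) \<Longrightarrow> u \<le> v \<Longrightarrow> norm u \<le> norm v"
  by (rule norm_labs_mono) (simp add: labs_pos)

lemma norm_le_labs_le: "labs (x::'a::real_banach_lattice) \<le> v \<Longrightarrow> norm x \<le> norm v"
  by (metis labs_nonneg norm_labs norm_mono_pos)

lemma pos_lipschitz: "labs (sup (u::'a::real_banach_lattice) 0 - sup v 0) \<le> labs (u - v)"
proof -
  have key: "sup a 0 - sup b 0 \<le> labs (a - b)" for a b
  proof -
    let ?d = "labs (a - b)"
    have "a \<le> b + ?d" using le_labs[of "a - b"] by (simp add: algebra_simps)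
    also have "b + ?d \<le> sup b 0 + ?d" by simp
    finally have 1: "a \<le> sup b 0 + ?d" .
    have 2: "0 \<le> sup b 0 + ?d" using labs_nonneg[of "a-b"] by (simp add: add_nonneg_nonneg)
    from 1 2 have "sup a 0 \<le> sup b 0 + ?d" by (rule sup_least)
    thus ?thesis by (metis diff_le_eq add.commute)
  qed
  have k1: "sup u 0 - sup v 0 \<le> labs (u - v)" by (rule key)
  have k2: "sup v 0 - sup u 0 \<le> labs (u - v)" using key[of v u] labs_commute_diff[of u v] by simp
  show ?thesis unfolding labs_le_iff using k1 k2 by (metis minus_diff_eq)
qed

lemma norm_pos_lipschitz: "norm (sup (u::'a::real_banach_lattice) 0 - sup v 0) \<le> norm (u - v)"
  using norm_le_labs_le[OF pos_lipschitz] norm_labs by metis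

lemma tendsto_pos:
  fixes f :: "'b \<Rightarrow> 'a::real_banach_lattice"
  assumes "(f \<longlongrightarrow> l) F"
  shows "((\<lambda>n. sup (f n) 0) \<longlongrightarrow> sup l 0) F"
proof -
  have "((\<lambda>n. f n - l) \<longlongrightarrow> 0) F" using assms by (simp add: Lim_null[symmetric])
  hence "((\<lambda>n. norm (f n - l)) \<longlongrightarrow> 0) F" by (simp add: tendsto_norm_zero)
  hence "((\<lambda>n. sup (f n) 0 - sup l 0) \<longlongrightarrow> 0) F"
    by (rule Lim_null_comparison[rotated]) (rule always_eventually, rule allI, rule norm_pos_lipschitz)
  thus ?thesis by (rule Lim_null[THEN iffD2])
qed

lemma inf_via_sup:
  fixes u w :: "'a::real_banach_lattice"
  shows "inf u w = u - sup (u - w) 0"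
proof -
  have "u - sup (u - w) 0 = u + inf (- (u - w)) (- 0)" by (rule diff_sup_eq_inf)
  also have "\<dots> = inf (u + - (u - w)) (u + - 0)" by (rule add_inf_distrib_left)
  also have "\<dots> = inf w u" by simp
  finally show ?thesis by (simp add: inf.commute)
qed

lemma tendsto_inf:
  fixes f g :: "'b \<Rightarrow> 'a::real_banach_lattice"
  assumes "(f \<longlongrightarrow> l) F" "(g \<longlongrightarrow> m) F"
  shows "((\<lambda>n. inf (f n) (g n)) \<longlongrightarrow> inf l m) F"
  unfolding inf_via_sup
  by (intro tendsto_diff assms tendsto_pos)

lemma tendsto_labs:
  fixes f :: "'b \<Rightarrow> 'a::real_banach_lattice"
  assumes "(f \<longlongrightarrow> l) F"
  shows "((\<lambda>n. labs (f n)) \<longlongrightarrow> labs l) F"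
  unfolding labs_def2
  by (intro tendsto_add tendsto_pos tendsto_minus assms)

lemma le_iff_sup0: "(a::'a::real_banach_lattice) \<le> u \<longleftrightarrow> sup (a - u) 0 = 0"
proof
  assume "a \<le> u"
  hence "a - u \<le> 0" by simp
  thus "sup (a - u) 0 = 0" by (rule sup_absorb2)
next
  assume h: "sup (a - u) 0 = 0"
  have "a - u \<le> sup (a - u) 0" by (rule sup_ge1)
  hence "a - u \<le> 0" using h by simp
  thus "a \<le> u" by simp
qed

lemma closed_sup0:
  fixes g :: "'a::real_banach_lattice \<Rightarrow> 'a"
  assumes g: "\<And>x l. x \<longlonglongrightarrow> l \<Longrightarrow> (\<lambda>n. g (x n)) \<longlonglongrightarrow> g l"
  shows "closed {u. sup (g u) 0 = 0}"
  unfolding closed_sequential_limits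
proof (intro allI impI, elim conjE)
  fix x :: "nat \<Rightarrow> 'a" and l
  assume h: "\<forall>n. x n \<in> {u. sup (g u) 0 = 0}" "x \<longlonglongrightarrow> l"
  have "(\<lambda>n. sup (g (x n)) 0) \<longlonglongrightarrow> sup (g l) 0"
    by (intro tendsto_pos g h(2))
  moreover have "(\<lambda>n. sup (g (x n)) 0) = (\<lambda>n. 0)" using h(1) by auto
  ultimately have "(\<lambda>n. 0) \<longlonglongrightarrow> sup (g l) 0" by simp
  from LIMSEQ_unique[OF this tendsto_const] show "l \<in> {u. sup (g u) 0 = 0}" by simp
qed

lemma closed_ge: "closed {u::'a::real_banach_lattice. a \<le> u}"
proof -
  have eq: "{u::'a. a \<le> u} = {u. sup (a - u) 0 = 0}" using le_iff_sup0 by blast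
  show ?thesis unfolding eq by (rule closed_sup0) (intro tendsto_diff tendsto_const)
qed

lemma closed_le: "closed {u::'a::real_banach_lattice. u \<le> a}"
proof -
  have eq: "{u::'a. u \<le> a} = {u. sup (u - a) 0 = 0}" using le_iff_sup0 by blast
  show ?thesis unfolding eq by (rule closed_sup0) (intro tendsto_diff tendsto_const)
qed

lemma lim_ge:
  fixes f :: "nat \<Rightarrow> 'a::real_banach_lattice"
  assumes "f \<longlonglongrightarrow> l" "eventually (\<lambda>n. a \<le> f n) sequentially"
  shows "a \<le> l"
proof -
  have "l \<in> {u. a \<le> u}" by (rule Lim_in_closed_set[OF closed_ge]) (use assms in auto)
  thus ?thesis by simp
qed

lemma lim_le:
  fixes f :: "nat \<Rightarrow> 'a::real_banach_lattice"
  assumes "f \<longlonglongrightarrow> l" "eventually (\<lambda>n. f n \<le> a) sequentially"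
  shows "l \<le> a"
proof -
  have "l \<in> {u. u \<le> a}" by (rule Lim_in_closed_set[OF closed_le]) (use assms in auto)
  thus ?thesis by simp
qed

lemma archimed:
  fixes v w :: "'a::real_banach_lattice"
  assumes "\<And>n::nat. v \<le> inverse (real (Suc n)) *\<^sub>R w"
  shows "v \<le> 0"
proof -
  have "(\<lambda>n. inverse (real (Suc n))) \<longlonglongrightarrow> 0" by (rule LIMSEQ_inverse_real_of_nat)
  hence "(\<lambda>n. inverse (real (Suc n)) *\<^sub>R w) \<longlonglongrightarrow> 0 *\<^sub>R w" by (intro tendsto_scaleR tendsto_const)
  hence "(\<lambda>n. inverse (real (Suc n)) *\<^sub>R w) \<longlonglongrightarrow> 0" by simp
  thus ?thesis using lim_ge[of "\<lambda>n. inverse (real (Suc n)) *\<^sub>R w" 0 v] assms by simp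
qed


definition dj :: "'a::real_banach_lattice \<Rightarrow> 'a \<Rightarrow> bool" where
  "dj u v \<longleftrightarrow> inf (labs u) (labs v) = 0"

lemma dj_sym: "dj u v \<Longrightarrow> dj v u"
  unfolding dj_def by (simp add: inf.commute)

lemma inf_add_le:
  fixes u v w :: "'a::real_banach_lattice"
  assumes u: "0 \<le> u" and v: "0 \<le> v" and w: "0 \<le> w"
  shows "inf (u + v) w \<le> inf u w + inf v w"
proof -
  have e1: "inf u w + inf v w = inf (u + inf v w) (w + inf v w)" by (rule add_inf_distrib_right)
  have e2: "u + inf v w = inf (u + v) (u + w)" by (rule add_inf_distrib_left)
  have e3: "w + inf v w = inf (w + v) (w + w)" by (rule add_inf_distrib_left)
  have a: "inf (u + v) w \<le> u + v" by (rule inf_le1)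
  have b: "inf (u + v) w \<le> w" by (rule inf_le2)
  have c1: "w \<le> u + w" using u by (simp add: add_increasing)
  have c2: "w \<le> w + v" using v by (simp add: add_increasing2)
  have c3: "w \<le> w + w" using w by (simp add: add_increasing2)
  have "inf (u + v) w \<le> inf (inf (u + v) (u + w)) (inf (w + v) (w + w))"
    using a b c1 c2 c3 by (meson le_inf_iff order_trans)
  thus ?thesis using e1 e2 e3 by simp
qed

lemma dj_add:
  fixes u v w :: "'a::real_banach_lattice"
  assumes "dj u w" "dj v w" shows "dj (u + v) w"
proof -
  have "inf (labs (u + v)) (labs w) \<le> inf (labs u + labs v) (labs w)"
    by (rule inf_mono[OF labs_triangle order_refl])
  also have "\<dots> \<le> inf (labs u) (labs w) + inf (labs v) (labs w)"
    by (rule inf_add_le) (auto simp: labs_nonneg)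
  also have "\<dots> = 0" using assms unfolding dj_def by simp
  finally have "inf (labs (u + v)) (labs w) \<le> 0" .
  moreover have "0 \<le> inf (labs (u + v)) (labs w)" by (simp add: labs_nonneg)
  ultimately show ?thesis unfolding dj_def by (rule order_antisym)
qed

lemma dj_le:
  fixes u v w :: "'a::real_banach_lattice"
  assumes le: "labs v \<le> c *\<^sub>R labs u" and d: "dj u w" shows "dj v w"
proof -
  define c' where "c' = max c 1"
  have c': "1 \<le> c'" "c \<le> c'" unfolding c'_def by auto
  have "c *\<^sub>R labs u \<le> c' *\<^sub>R labs u" by (rule scaleR_right_mono[OF c'(2) labs_nonneg])
  hence lv: "labs v \<le> c' *\<^sub>R labs u" using le by (rule order_trans[rotated])
  have lw: "labs w \<le> c' *\<^sub>R labs w"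
    using scaleR_right_mono[OF c'(1) labs_nonneg, of w] by simp
  have "inf (labs v) (labs w) \<le> inf (c' *\<^sub>R labs u) (c' *\<^sub>R labs w)"
    by (rule inf_mono[OF lv lw])
  also have "\<dots> = c' *\<^sub>R inf (labs u) (labs w)"
    using c'(1) by (subst scaleR_inf_distrib) auto
  also have "\<dots> = 0" using d unfolding dj_def by simp
  finally have "inf (labs v) (labs w) \<le> 0" .
  moreover have "0 \<le> inf (labs v) (labs w)" by (simp add: labs_nonneg)
  ultimately show ?thesis unfolding dj_def by (rule order_antisym)
qed

lemma dj_scale: "dj u w \<Longrightarrow> dj (c *\<^sub>R u) w"
  by (rule dj_le[of _ "\<bar>c\<bar>"]) (simp_all add: labs_scaleR)

lemma dj_neg: "dj u w \<Longrightarrow> dj (- u) w"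
  using dj_scale[of u w "-1"] by simp

lemma dj_diff: "dj u w \<Longrightarrow> dj v w \<Longrightarrow> dj (u - v) w"
  using dj_add[of u w "- v"] dj_neg[of v w] by simp

lemma dj_zero: "dj (0::'a::real_banach_lattice) w"
  unfolding dj_def by (simp add: labs_nonneg inf_absorb1)

lemma dj_sum: "finite F \<Longrightarrow> (\<And>i. i \<in> F \<Longrightarrow> dj (f i) w) \<Longrightarrow> dj (sum f F) w"
  by (induction F rule: finite_induct) (auto simp: dj_zero intro: dj_add)

lemma dj_self: "dj u u \<Longrightarrow> u = 0"
  unfolding dj_def by (simp add: labs_zero_iff)

lemma dj_lim:
  fixes f :: "nat \<Rightarrow> 'a::real_banach_lattice"
  assumes "f \<longlonglongrightarrow> l" "eventually (\<lambda>n. dj (f n) w) sequentially"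
  shows "dj l w"
proof -
  have t: "(\<lambda>n. inf (labs (f n)) (labs w)) \<longlonglongrightarrow> inf (labs l) (labs w)"
    by (intro tendsto_inf tendsto_labs assms(1) tendsto_const)
  have ev: "eventually (\<lambda>n. inf (labs (f n)) (labs w) = 0) sequentially"
    using assms(2) by (rule eventually_mono) (simp add: dj_def)
  have "(\<lambda>n. 0) \<longlonglongrightarrow> inf (labs l) (labs w)"
    by (rule tendsto_cong[OF ev, THEN iffD1, OF t])
  from LIMSEQ_unique[OF this tendsto_const] show ?thesis unfolding dj_def by simp
qed

section \<open>Atoms\<close>

definition is_atom :: "'a::real_banach_lattice \<Rightarrow> bool" where
  "is_atom a \<longleftrightarrow> 0 < a \<and> (\<forall>v. 0 \<le> v \<and> v \<le> a \<longrightarrow> (\<exists>r::real. v = r *\<^sub>R a)) \<and> norm a = 1"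

lemma pos_scale_le0:
  fixes a :: "'a::real_banach_lattice"
  assumes a: "0 < a" and h: "t *\<^sub>R a \<le> 0" shows "t \<le> 0"
proof (rule ccontr)
  assume "\<not> t \<le> 0"
  hence t: "0 < t" by simp
  have "(1/t) *\<^sub>R (t *\<^sub>R a) \<le> (1/t) *\<^sub>R 0" using t h by (intro scaleR_left_mono) auto
  hence "a \<le> 0" using t by simp
  thus False using a by simp
qed

lemma scale_le_iff:
  fixes a :: "'a::real_banach_lattice"
  assumes a: "0 < a" shows "s *\<^sub>R a \<le> t *\<^sub>R a \<longleftrightarrow> s \<le> t"
proof
  assume "s *\<^sub>R a \<le> t *\<^sub>R a"
  hence "(s - t) *\<^sub>R a \<le> 0" by (simp add: scaleR_diff_left)
  thus "s \<le> t" using pos_scale_le0[OF a] by fastforce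
next
  assume "s \<le> t" thus "s *\<^sub>R a \<le> t *\<^sub>R a" using a by (intro scaleR_right_mono) auto
qed

lemma atom_pos: "is_atom a \<Longrightarrow> 0 < a" and atom_nonneg: "is_atom a \<Longrightarrow> 0 \<le> a"
  and atom_norm: "is_atom a \<Longrightarrow> norm a = 1"
  unfolding is_atom_def by auto

lemma atom_labs: "is_atom a \<Longrightarrow> labs a = a"
  by (rule labs_pos[OF atom_nonneg])

lemma atom_below: "is_atom a \<Longrightarrow> 0 \<le> v \<Longrightarrow> v \<le> a \<Longrightarrow> \<exists>r. 0 \<le> r \<and> v = r *\<^sub>R a"
proof -
  assume at: "is_atom a" and v: "0 \<le> v" "v \<le> a"
  then obtain r where r: "v = r *\<^sub>R a" unfolding is_atom_def by blast
  have "0 *\<^sub>R a \<le> r *\<^sub>R a" using v r by simp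
  hence "0 \<le> r" using scale_le_iff[OF atom_pos[OF at]] by blast
  thus ?thesis using r by blast
qed

lemma atom_disj:
  fixes a b :: "'a::real_banach_lattice"
  assumes a: "is_atom a" and b: "is_atom b" and ne: "a \<noteq> b"
  shows "dj a b"
proof -
  let ?m = "inf a b"
  have m0: "0 \<le> ?m" using atom_nonneg[OF a] atom_nonneg[OF b] by simp
  obtain r where r: "0 \<le> r" "?m = r *\<^sub>R a" using atom_below[OF a m0 inf_le1] by blast
  obtain s where s: "0 \<le> s" "?m = s *\<^sub>R b" using atom_below[OF b m0 inf_le2] by blast
  have "?m = 0"
  proof (rule ccontr)
    assume nz: "?m \<noteq> 0"
    hence "r \<noteq> 0" using r by auto
    hence rp: "0 < r" using r by simp
    have "s \<noteq> 0" using s nz by auto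
    have ab: "a = (s / r) *\<^sub>R b" using r(2) s(2) rp
      by (metis divide_inverse_commute inverse_eq_divide scaleR_scaleR nonzero_eq_divide_eq
          order_less_irrefl scaleR_one)
    have "norm a = (s / r) * norm b" using ab rp s(1) by simp
    hence "s / r = 1" using atom_norm[OF a] atom_norm[OF b] by simp
    hence "a = b" using ab by simp
    thus False using ne by simp
  qed
  thus ?thesis unfolding dj_def using atom_labs[OF a] atom_labs[OF b] by simp
qed

lemma dj_atom_scale:
  fixes a :: "'a::real_banach_lattice"
  assumes a: "0 < a" and d: "dj (t *\<^sub>R a) a" shows "t = 0"
proof -
  have la: "labs a = a" using a by (simp add: labs_pos)
  have i0: "inf (\<bar>t\<bar> *\<^sub>R a) a = 0" using d la unfolding dj_def by (simp add: labs_scaleR)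
  have "min \<bar>t\<bar> 1 *\<^sub>R a \<le> \<bar>t\<bar> *\<^sub>R a" using a by (intro scaleR_right_mono) auto
  moreover have "min \<bar>t\<bar> 1 *\<^sub>R a \<le> 1 *\<^sub>R a" using a by (intro scaleR_right_mono) auto
  ultimately have "min \<bar>t\<bar> 1 *\<^sub>R a \<le> inf (\<bar>t\<bar> *\<^sub>R a) a" by simp
  hence "min \<bar>t\<bar> 1 *\<^sub>R a \<le> 0" using i0 by simp
  hence "min \<bar>t\<bar> 1 \<le> 0" by (rule pos_scale_le0[OF a])
  thus "t = 0" by (simp add: min_def split: if_splits)
qed

section \<open>Coefficient functional of an atom\<close>

definition coef :: "'a::real_banach_lattice \<Rightarrow> 'a \<Rightarrow> real" where
  "coef a x = (THE t. dj (x - t *\<^sub>R a) a)"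

lemma coef_unique:
  fixes a :: "'a::real_banach_lattice"
  assumes a: "0 < a" and "dj (x - s *\<^sub>R a) a" "dj (x - t *\<^sub>R a) a"
  shows "s = t"
proof -
  have "dj ((x - s *\<^sub>R a) - (x - t *\<^sub>R a)) a" by (rule dj_diff[OF assms(2) assms(3)])
  moreover have "(x - s *\<^sub>R a) - (x - t *\<^sub>R a) = (t - s) *\<^sub>R a" by (simp add: scaleR_diff_left)
  ultimately have "t - s = 0" using dj_atom_scale[OF a] by metis
  thus ?thesis by simp
qed

lemma coef_exists_pos:
  fixes a u :: "'a::real_banach_lattice"
  assumes a: "is_atom a" and u: "0 \<le> u"
  shows "\<exists>r\<ge>0. r *\<^sub>R a \<le> u \<and> dj (u - r *\<^sub>R a) a"
proof -
  define S where "S = {s. 0 \<le> s \<and> s *\<^sub>R a \<le> u}"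
  have a0: "0 < a" using atom_pos[OF a] .
  have bound: "s \<le> norm u" if "s \<in> S" for s
  proof -
    have s: "0 \<le> s" "s *\<^sub>R a \<le> u" using that unfolding S_def by auto
    have "0 \<le> s *\<^sub>R a" using s(1) atom_nonneg[OF a] by (rule scaleR_nonneg_nonneg)
    hence "norm (s *\<^sub>R a) \<le> norm u" using s(2) by (rule norm_mono_pos)
    thus ?thesis using s(1) atom_norm[OF a] by simp
  qed
  have ne: "S \<noteq> {}" and z: "0 \<in> S" using u unfolding S_def by auto
  have bdd: "bdd_above S" by (rule bdd_aboveI[of _ "norm u"]) (rule bound)
  define r where "r = Sup S"
  have r0: "0 \<le> r" unfolding r_def using cSup_upper[OF z bdd] .
  have upper: "s \<le> r" if "s \<in> S" for s unfolding r_def using cSup_upper[OF that bdd] .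
  have ra: "r *\<^sub>R a \<le> u"
  proof -
    have "r *\<^sub>R a - u \<le> inverse (real (Suc n)) *\<^sub>R a" for n
    proof -
      have "r - inverse (real (Suc n)) < r" by simp
      then obtain s where s: "s \<in> S" "r - inverse (real (Suc n)) < s"
        unfolding r_def using less_cSup_iff[OF ne bdd] by blast
      let ?e = "inverse (real (Suc n))"
      have h1: "r *\<^sub>R a \<le> (s + ?e) *\<^sub>R a"
        using s(2) a0 by (intro scaleR_right_mono) auto
      have h2: "(s + ?e) *\<^sub>R a = s *\<^sub>R a + ?e *\<^sub>R a" by (rule scaleR_add_left)
      have "s *\<^sub>R a \<le> u" using s(1) unfolding S_def by auto
      hence h3: "s *\<^sub>R a + ?e *\<^sub>R a \<le> u + ?e *\<^sub>R a" by (rule add_right_mono)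
      from h1 h2 h3 have "r *\<^sub>R a \<le> u + ?e *\<^sub>R a" by (metis order_trans)
      thus ?thesis by (metis diff_le_eq add.commute)
    qed
    hence "r *\<^sub>R a - u \<le> 0" by (rule archimed)
    thus ?thesis by simp
  qed
  define v where "v = u - r *\<^sub>R a"
  have v0: "0 \<le> v" using ra unfolding v_def by simp
  have i0: "0 \<le> inf v a" using v0 atom_nonneg[OF a] by simp
  obtain t where t: "0 \<le> t" "inf v a = t *\<^sub>R a" using atom_below[OF a i0 inf_le2] by blast
  have "t = 0"
  proof (rule ccontr)
    assume "t \<noteq> 0"
    hence tp: "0 < t" using t by simp
    have "t *\<^sub>R a \<le> v" using t(2) by (metis inf_le1)
    hence "(r + t) *\<^sub>R a \<le> u" unfolding v_def by (simp add: scaleR_add_left algebra_simps)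
    hence "r + t \<in> S" unfolding S_def using r0 tp by simp
    hence "r + t \<le> r" by (rule upper)
    thus False using tp by simp
  qed
  hence "inf v a = 0" using t by simp
  hence "dj v a" unfolding dj_def using labs_pos[OF v0] atom_labs[OF a] by simp
  thus ?thesis using r0 ra unfolding v_def by blast
qed

lemma coef_exists:
  fixes a x :: "'a::real_banach_lattice"
  assumes a: "is_atom a"
  shows "\<exists>t. dj (x - t *\<^sub>R a) a"
proof -
  obtain p where p: "dj (sup x 0 - p *\<^sub>R a) a"
    using coef_exists_pos[OF a, of "sup x 0"] by auto
  obtain q where q: "dj (sup (-x) 0 - q *\<^sub>R a) a"
    using coef_exists_pos[OF a, of "sup (-x) 0"] by auto
  have "dj ((sup x 0 - p *\<^sub>R a) - (sup (-x) 0 - q *\<^sub>R a)) a" using p q by (rule dj_diff)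
  moreover have "(sup x 0 - p *\<^sub>R a) - (sup (-x) 0 - q *\<^sub>R a) = x - (p - q) *\<^sub>R a"
    using pos_neg[of x] by (simp add: scaleR_diff_left algebra_simps)
  ultimately show ?thesis by metis
qed

lemma coef_eq:
  assumes a: "is_atom a" and d: "dj (x - t *\<^sub>R a) a"
  shows "coef a x = t"
  unfolding coef_def
  using coef_unique[OF atom_pos[OF a]] d by (intro the_equality) auto

lemma coef_dj:
  assumes a: "is_atom a"
  shows "dj (x - coef a x *\<^sub>R a) a"
proof -
  obtain t where "dj (x - t *\<^sub>R a) a" using coef_exists[OF a] by blast
  thus ?thesis using coef_eq[OF a] by metis
qed

lemma coef_add:
  assumes a: "is_atom a" shows "coef a (x + y) = coef a x + coef a y"
proof (rule coef_eq[OF a])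
  have "dj ((x - coef a x *\<^sub>R a) + (y - coef a y *\<^sub>R a)) a"
    by (rule dj_add[OF coef_dj[OF a] coef_dj[OF a]])
  thus "dj (x + y - (coef a x + coef a y) *\<^sub>R a) a"
    by (simp add: scaleR_add_left algebra_simps)
qed

lemma coef_scale:
  assumes a: "is_atom a" shows "coef a (c *\<^sub>R x) = c * coef a x"
proof (rule coef_eq[OF a])
  have "dj (c *\<^sub>R (x - coef a x *\<^sub>R a)) a"
    by (rule dj_scale[OF coef_dj[OF a]])
  thus "dj (c *\<^sub>R x - (c * coef a x) *\<^sub>R a) a"
    by (simp add: scaleR_diff_right)
qed

lemma coef_diff:
  assumes a: "is_atom a" shows "coef a (x - y) = coef a x - coef a y"
  using coef_add[OF a, of x "-y"] coef_scale[OF a, of "-1" y] by simp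

lemma coef_zero: "is_atom a \<Longrightarrow> coef a 0 = 0"
  using coef_scale[of a 0 0] by simp

lemma coef_sum:
  assumes a: "is_atom a" and F: "finite F"
  shows "coef a (sum f F) = (\<Sum>i\<in>F. coef a (f i))"
  using F by (induction F rule: finite_induct) (auto simp: coef_zero[OF a] coef_add[OF a])

lemma coef_self: "is_atom a \<Longrightarrow> coef a a = 1"
  by (rule coef_eq) (simp_all add: dj_zero)

lemma coef_other: "is_atom a \<Longrightarrow> is_atom b \<Longrightarrow> a \<noteq> b \<Longrightarrow> coef a b = 0"
  by (rule coef_eq) (simp_all add: atom_disj)

lemma coef_of_dj: "is_atom a \<Longrightarrow> dj x a \<Longrightarrow> coef a x = 0"
  by (rule coef_eq) simp_all

lemma coef_pos:
  assumes a: "is_atom a" and u: "0 \<le> u"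
  shows "0 \<le> coef a u" "coef a u *\<^sub>R a \<le> u"
proof -
  obtain r where r: "0 \<le> r" "r *\<^sub>R a \<le> u" "dj (u - r *\<^sub>R a) a" using coef_exists_pos[OF a u] by blast
  have "coef a u = r" using coef_eq[OF a r(3)] .
  thus "0 \<le> coef a u" "coef a u *\<^sub>R a \<le> u" using r by auto
qed

lemma coef_le_norm_pos:
  assumes a: "is_atom a" and u: "0 \<le> u"
  shows "coef a u \<le> norm u"
proof -
  have "0 \<le> coef a u *\<^sub>R a" using coef_pos(1)[OF a u] atom_nonneg[OF a] by (rule scaleR_nonneg_nonneg)
  hence "norm (coef a u *\<^sub>R a) \<le> norm u" using coef_pos(2)[OF a u] by (rule norm_mono_pos)
  thus ?thesis using coef_pos(1)[OF a u] atom_norm[OF a] by simp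
qed

lemma norm_pos_part_le: "norm (sup (x::'a::real_banach_lattice) 0) \<le> norm x"
  using norm_mono_pos[of "sup x 0" "labs x"] norm_labs[of x] le_labs[of x] labs_nonneg[of x]
  by simp

lemma norm_neg_part_le: "norm (sup (- (x::'a::real_banach_lattice)) 0) \<le> norm x"
  using norm_pos_part_le[of "-x"] by simp

lemma coef_split:
  assumes a: "is_atom a"
  shows "coef a x = coef a (sup x 0) - coef a (sup (-x) 0)"
  using coef_diff[OF a, of "sup x 0" "sup (-x) 0"] pos_neg[of x] by simp

lemma coef_abs_le_norm:
  assumes a: "is_atom a" shows "\<bar>coef a x\<bar> \<le> norm x"
proof -
  have p: "0 \<le> coef a (sup x 0)" "coef a (sup x 0) \<le> norm x"
    using coef_pos(1)[OF a, of "sup x 0"] coef_le_norm_pos[OF a, of "sup x 0"] norm_pos_part_le[of x]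
    by auto
  have q: "0 \<le> coef a (sup (-x) 0)" "coef a (sup (-x) 0) \<le> norm x"
    using coef_pos(1)[OF a, of "sup (-x) 0"] coef_le_norm_pos[OF a, of "sup (-x) 0"] norm_neg_part_le[of x]
    by auto
  show ?thesis using coef_split[OF a, of x] p q by linarith
qed

lemma coef_abs_le_parts:
  assumes a: "is_atom a"
  shows "\<bar>coef a x\<bar> \<le> coef a (sup x 0) + coef a (sup (-x) 0)"
  using coef_split[OF a, of x] coef_pos(1)[OF a, of "sup x 0"] coef_pos(1)[OF a, of "sup (-x) 0"]
  by auto

lemma tendsto_coef:
  fixes f :: "nat \<Rightarrow> 'a::real_banach_lattice"
  assumes a: "is_atom a" and f: "f \<longlonglongrightarrow> l"
  shows "(\<lambda>n. coef a (f n)) \<longlonglongrightarrow> coef a l"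
proof -
  have "(\<lambda>n. f n - l) \<longlonglongrightarrow> 0" using f by (rule Lim_null[THEN iffD1])
  hence "(\<lambda>n. norm (f n - l)) \<longlonglongrightarrow> 0" by (simp add: tendsto_norm_zero)
  hence "(\<lambda>n. coef a (f n) - coef a l) \<longlonglongrightarrow> 0"
  proof (rule Lim_null_comparison[rotated])
    show "\<forall>\<^sub>F n in sequentially. norm (coef a (f n) - coef a l) \<le> norm (f n - l)"
      using coef_abs_le_norm[OF a] by (simp add: coef_diff[OF a, symmetric])
  qed
  thus ?thesis by (rule Lim_null[THEN iffD2])
qed


lemma sum_atoms_le:
  fixes u :: "'a::real_banach_lattice"
  assumes F: "finite F" and at: "\<And>b. b \<in> F \<Longrightarrow> is_atom b" and u: "0 \<le> u"
  shows "(\<Sum>b\<in>F. coef b u *\<^sub>R b) \<le> u"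
  using F at u
proof (induction F arbitrary: u rule: finite_induct)
  case empty thus ?case by simp
next
  case (insert a F)
  have a: "is_atom a" using insert.prems by simp
  define u' where "u' = u - coef a u *\<^sub>R a"
  have u'0: "0 \<le> u'" using coef_pos(2)[OF a insert.prems(2)] unfolding u'_def by simp
  have cb: "coef b u' = coef b u" if "b \<in> F" for b
  proof -
    have b: "is_atom b" using insert.prems(1) that by simp
    have "a \<noteq> b" using insert.hyps(2) that by auto
    hence "coef b a = 0" using coef_other[OF b a] by auto
    thus ?thesis unfolding u'_def by (simp add: coef_diff[OF b] coef_scale[OF b])
  qed
  have IH: "(\<Sum>b\<in>F. coef b u' *\<^sub>R b) \<le> u'"
    using insert.IH[of u'] insert.prems(1) u'0 by simp
  have "(\<Sum>b\<in>insert a F. coef b u *\<^sub>R b) = coef a u *\<^sub>R a + (\<Sum>b\<in>F. coef b u' *\<^sub>R b)"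
    using insert.hyps cb by simp
  also have "\<dots> \<le> coef a u *\<^sub>R a + u'" using IH by (rule add_left_mono)
  also have "\<dots> = u" unfolding u'_def by simp
  finally show ?case .
qed

lemma labs_sum_le:
  fixes f :: "'b \<Rightarrow> 'a::real_banach_lattice"
  assumes "finite F"
  shows "labs (sum f F) \<le> (\<Sum>i\<in>F. labs (f i))"
  using assms
proof (induction F rule: finite_induct)
  case empty thus ?case by simp
next
  case (insert a F)
  have "labs (sum f (insert a F)) = labs (f a + sum f F)" using insert.hyps by simp
  also have "\<dots> \<le> labs (f a) + labs (sum f F)" by (rule labs_triangle)
  also have "\<dots> \<le> labs (f a) + (\<Sum>i\<in>F. labs (f i))" using insert.IH by (rule add_left_mono)
  also have "\<dots> = (\<Sum>i\<in>insert a F. labs (f i))" using insert.hyps by simp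
  finally show ?case .
qed

lemma atom_sum_bound:
  fixes x :: "'a::real_banach_lattice"
  assumes F: "finite F" and at: "\<And>b. b \<in> F \<Longrightarrow> is_atom b"
    and e: "0 \<le> e" and c: "\<And>b. b \<in> F \<Longrightarrow> \<bar>c b\<bar> \<le> e"
  shows "labs (\<Sum>b\<in>F. (c b * coef b x) *\<^sub>R b) \<le> e *\<^sub>R labs x"
proof -
  let ?p = "sup x 0" and ?q = "sup (-x) 0"
  have "labs (\<Sum>b\<in>F. (c b * coef b x) *\<^sub>R b) \<le> (\<Sum>b\<in>F. labs ((c b * coef b x) *\<^sub>R b))"
    by (rule labs_sum_le[OF F])
  also have "\<dots> = (\<Sum>b\<in>F. \<bar>c b * coef b x\<bar> *\<^sub>R b)"
    by (rule sum.cong) (simp_all add: labs_scaleR atom_labs at)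
  also have "\<dots> \<le> (\<Sum>b\<in>F. (e * (coef b ?p + coef b ?q)) *\<^sub>R b)"
  proof (rule sum_mono)
    fix b assume b: "b \<in> F"
    have ab: "is_atom b" using at b .
    have "\<bar>c b * coef b x\<bar> = \<bar>c b\<bar> * \<bar>coef b x\<bar>" by (simp add: abs_mult)
    also have "\<dots> \<le> e * (coef b ?p + coef b ?q)"
      using c[OF b] coef_abs_le_parts[OF ab, of x] e by (intro mult_mono) auto
    finally show "\<bar>c b * coef b x\<bar> *\<^sub>R b \<le> (e * (coef b ?p + coef b ?q)) *\<^sub>R b"
      using atom_nonneg[OF ab] by (intro scaleR_right_mono)
  qed
  also have "\<dots> = e *\<^sub>R ((\<Sum>b\<in>F. coef b ?p *\<^sub>R b) + (\<Sum>b\<in>F. coef b ?q *\<^sub>R b))"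
    by (simp add: scaleR_add_right scaleR_sum_right distrib_left scaleR_add_left sum.distrib)
  also have "\<dots> \<le> e *\<^sub>R (?p + ?q)"
    using sum_atoms_le[OF F at, of ?p] sum_atoms_le[OF F at, of ?q] e
    by (intro scaleR_left_mono add_mono) auto
  also have "\<dots> = e *\<^sub>R labs x" by (simp add: labs_def2)
  finally show ?thesis .
qed

lemma atom_sum_norm_bound:
  fixes x :: "'a::real_banach_lattice"
  assumes F: "finite F" and at: "\<And>b. b \<in> F \<Longrightarrow> is_atom b"
    and e: "0 \<le> e" and c: "\<And>b. b \<in> F \<Longrightarrow> \<bar>c b\<bar> \<le> e"
  shows "norm (\<Sum>b\<in>F. (c b * coef b x) *\<^sub>R b) \<le> e * norm x"
proof -
  have "norm (\<Sum>b\<in>F. (c b * coef b x) *\<^sub>R b) \<le> norm (e *\<^sub>R labs x)"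
    by (rule norm_le_labs_le[OF atom_sum_bound[OF F at e c]])
  also have "\<dots> = e * norm x" using e by (simp add: norm_labs)
  finally show ?thesis .
qed

section \<open>Central operators\<close>

lemma center_labs:
  fixes S :: "'a::real_banach_lattice \<Rightarrow> 'a"
  assumes lin: "linear S" and c: "0 \<le> c"
    and b: "\<And>x. 0 \<le> x \<Longrightarrow> - (c *\<^sub>R x) \<le> S x \<and> S x \<le> c *\<^sub>R x"
  shows "labs (S x) \<le> c *\<^sub>R labs x"
proof -
  let ?p = "sup x 0" and ?q = "sup (-x) 0"
  have p: "0 \<le> ?p" and q: "0 \<le> ?q" by simp_all
  have Sx: "S x = S ?p - S ?q" using pos_neg[of x] linear_diff[OF lin, of ?p ?q] by metis
  have l: "c *\<^sub>R labs x = c *\<^sub>R ?p + c *\<^sub>R ?q" by (simp add: labs_def2 scaleR_add_right)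
  have "S x \<le> c *\<^sub>R ?p + c *\<^sub>R ?q"
    unfolding Sx using b[OF p] b[OF q] by (metis add_mono diff_conv_add_uminus neg_le_iff_le minus_minus)
  moreover have "- S x \<le> c *\<^sub>R ?p + c *\<^sub>R ?q"
  proof -
    have "- S x = S ?q - S ?p" unfolding Sx by simp
    also have "\<dots> \<le> c *\<^sub>R ?q + c *\<^sub>R ?p"
      using b[OF p] b[OF q] by (metis add_mono diff_conv_add_uminus neg_le_iff_le minus_minus)
    finally show ?thesis by (simp add: add.commute)
  qed
  ultimately show ?thesis unfolding labs_le_iff l by simp
qed

definition cbound :: "('a::real_banach_lattice \<Rightarrow> 'a) \<Rightarrow> real \<Rightarrow> bool" where
  "cbound S c \<longleftrightarrow> linear S \<and> 0 \<le> c \<and> (\<forall>x. labs (S x) \<le> c *\<^sub>R labs x)"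

lemma real_center_cbound:
  assumes "S \<in> real_center" shows "\<exists>c. cbound S c"
proof -
  obtain c where lin: "linear S" and b: "\<And>x. 0 \<le> x \<Longrightarrow> - (c *\<^sub>R x) \<le> S x \<and> S x \<le> c *\<^sub>R x"
    using assms unfolding real_center_def by blast
  define c' where "c' = max c 0"
  have b': "- (c' *\<^sub>R x) \<le> S x \<and> S x \<le> c' *\<^sub>R x" if "0 \<le> x" for x
  proof -
    have "c *\<^sub>R x \<le> c' *\<^sub>R x" unfolding c'_def using that by (intro scaleR_right_mono) auto
    thus ?thesis using b[OF that] by (meson neg_le_iff_le order_trans)
  qed
  have "0 \<le> c'" unfolding c'_def by simp
  thus ?thesis unfolding cbound_def using lin center_labs[OF lin _ b'] by blast
qed

lemma cbound_real_center:
  assumes "cbound S c" shows "S \<in> real_center"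
proof -
  have lin: "linear S" and c: "0 \<le> c" and l: "\<And>x. labs (S x) \<le> c *\<^sub>R labs x"
    using assms unfolding cbound_def by auto
  have "- (c *\<^sub>R x) \<le> S x \<and> S x \<le> c *\<^sub>R x" if "0 \<le> x" for x
  proof -
    have "S x \<le> c *\<^sub>R x \<and> - S x \<le> c *\<^sub>R x" using l[of x] labs_pos[OF that] unfolding labs_le_iff by simp
    thus ?thesis by (metis minus_le_iff)
  qed
  thus ?thesis unfolding real_center_def using lin by blast
qed

lemma cbound_norm:
  assumes "cbound S c" shows "norm (S x) \<le> c * norm x"
proof -
  have "norm (S x) \<le> norm (c *\<^sub>R labs x)"
    using assms unfolding cbound_def by (intro norm_le_labs_le) blast
  also have "\<dots> = c * norm x" using assms unfolding cbound_def by (simp add: norm_labs)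
  finally show ?thesis .
qed

lemma cbound_linear: "cbound S c \<Longrightarrow> linear S" unfolding cbound_def by simp

lemma cbound_tendsto:
  fixes f :: "nat \<Rightarrow> 'a::real_banach_lattice"
  assumes S: "cbound S c" and f: "f \<longlonglongrightarrow> l"
  shows "(\<lambda>n. S (f n)) \<longlonglongrightarrow> S l"
proof -
  have lin: "linear S" using S by (rule cbound_linear)
  have "(\<lambda>n. f n - l) \<longlonglongrightarrow> 0" using f by (rule Lim_null[THEN iffD1])
  hence "(\<lambda>n. c * norm (f n - l)) \<longlonglongrightarrow> 0"
    by (intro tendsto_mult_right_zero) (simp add: tendsto_norm_zero)
  hence "(\<lambda>n. S (f n) - S l) \<longlonglongrightarrow> 0"
  proof (rule Lim_null_comparison[rotated])
    show "\<forall>\<^sub>F n in sequentially. norm (S (f n) - S l) \<le> c * norm (f n - l)"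
      using cbound_norm[OF S] by (simp add: linear_diff[OF lin, symmetric])
  qed
  thus ?thesis by (rule Lim_null[THEN iffD2])
qed

definition lam :: "('a::real_banach_lattice \<Rightarrow> 'a) \<Rightarrow> 'a \<Rightarrow> real" where
  "lam S a = (SOME t. S a = t *\<^sub>R a)"

lemma cbound_atom:
  fixes a :: "'a::real_banach_lattice"
  assumes S: "cbound S c" and a: "is_atom a"
  shows "S a = lam S a *\<^sub>R a" "\<bar>lam S a\<bar> \<le> c"
proof -
  have lin: "linear S" and c: "0 \<le> c" using S unfolding cbound_def by auto
  have l: "labs (S a) \<le> c *\<^sub>R a"
    using S atom_labs[OF a] unfolding cbound_def by metis
  have a0: "0 < a" using atom_pos[OF a] .
  have ex: "\<exists>t. S a = t *\<^sub>R a"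
  proof (cases "c = 0")
    case True
    hence "labs (S a) \<le> 0" using l by simp
    hence "S a = 0" using labs_nonneg[of "S a"] labs_zero_iff by (metis order_antisym)
    thus ?thesis by (intro exI[of _ 0]) simp
  next
    case False
    hence cp: "0 < c" using c by simp
    define v where "v = (1 / (2 * c)) *\<^sub>R (S a + c *\<^sub>R a)"
    have u1: "S a \<le> c *\<^sub>R a" and u2: "- S a \<le> c *\<^sub>R a" using l unfolding labs_le_iff by auto
    have h1: "0 \<le> S a + c *\<^sub>R a" using add_right_mono[OF u2, of "S a"] by (simp add: add.commute)
    have e2: "(2 * c) *\<^sub>R a = c *\<^sub>R a + c *\<^sub>R a" by (metis mult_2 scaleR_add_left)
    have h2: "S a + c *\<^sub>R a \<le> (2 * c) *\<^sub>R a" unfolding e2 using add_right_mono[OF u1, of "c *\<^sub>R a"] .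
    have v0: "0 \<le> v" unfolding v_def using cp h1 by (intro scaleR_nonneg_nonneg) auto
    have "v \<le> (1 / (2 * c)) *\<^sub>R ((2 * c) *\<^sub>R a)" unfolding v_def using cp h2 by (intro scaleR_left_mono) auto
    hence va: "v \<le> a" using cp by simp
    obtain r where r: "v = r *\<^sub>R a" using a v0 va unfolding is_atom_def by blast
    have "S a + c *\<^sub>R a = (2 * c) *\<^sub>R v" unfolding v_def using cp by simp
    hence "S a = (2 * c * r - c) *\<^sub>R a" unfolding r by (simp add: algebra_simps scaleR_diff_left)
    thus ?thesis by blast
  qed
  show eq: "S a = lam S a *\<^sub>R a" unfolding lam_def using someI_ex[OF ex] .
  have "labs (lam S a *\<^sub>R a) \<le> c *\<^sub>R a" using l eq by simp
  hence "\<bar>lam S a\<bar> *\<^sub>R a \<le> c *\<^sub>R a" by (simp add: labs_scaleR atom_labs[OF a])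
  thus "\<bar>lam S a\<bar> \<le> c" using scale_le_iff[OF a0] by blast
qed

lemma coef_cbound:
  fixes x :: "'a::real_banach_lattice"
  assumes S: "cbound S c" and b: "is_atom b"
  shows "coef b (S x) = lam S b * coef b x"
proof (rule coef_eq[OF b])
  have lin: "linear S" using S by (rule cbound_linear)
  define x' where "x' = x - coef b x *\<^sub>R b"
  have d: "dj x' b" unfolding x'_def by (rule coef_dj[OF b])
  have "labs (S x') \<le> c *\<^sub>R labs x'" using S unfolding cbound_def by blast
  hence d': "dj (S x') b" using d by (rule dj_le)
  have "S x = coef b x *\<^sub>R S b + S x'"
    unfolding x'_def by (simp add: linear_diff[OF lin] linear_scale[OF lin])
  hence "S x - (lam S b * coef b x) *\<^sub>R b = S x'"
    using cbound_atom(1)[OF S b] by (simp add: algebra_simps)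
  thus "dj (S x - (lam S b * coef b x) *\<^sub>R b) b" using d' by simp
qed


definition Gs :: "('a::real_banach_lattice \<Rightarrow> 'a) \<Rightarrow> nat \<Rightarrow> 'a set" where
  "Gs S n = {a. is_atom a \<and> inverse (real (Suc n)) \<le> \<bar>lam S a\<bar>}"

definition Rn :: "('a::real_banach_lattice \<Rightarrow> 'a) \<Rightarrow> nat \<Rightarrow> 'a \<Rightarrow> 'a" where
  "Rn S n x = (\<Sum>a\<in>Gs S n. (lam S a * coef a x) *\<^sub>R a)"

definition Rop :: "('a::real_banach_lattice \<Rightarrow> 'a) \<Rightarrow> 'a \<Rightarrow> 'a" where
  "Rop S x = lim (\<lambda>n. Rn S n x)"

lemma Gs_atom: "a \<in> Gs S n \<Longrightarrow> is_atom a" unfolding Gs_def by simp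

lemma Gs_mono: "m \<le> n \<Longrightarrow> Gs S m \<subseteq> Gs S n"
proof
  fix a assume mn: "m \<le> n" and a: "a \<in> Gs S m"
  have i: "inverse (real (Suc n)) \<le> inverse (real (Suc m))" using mn by (simp add: le_imp_inverse_le)
  have h: "inverse (real (Suc m)) \<le> \<bar>lam S a\<bar>" "is_atom a" using a unfolding Gs_def by auto
  have "inverse (real (Suc n)) \<le> \<bar>lam S a\<bar>" using i h(1) by (rule order_trans)
  thus "a \<in> Gs S n" using h(2) unfolding Gs_def by blast
qed

locale rdata =
  fixes S :: "'a::real_banach_lattice \<Rightarrow> 'a" and c :: real
  assumes cb: "cbound S c" and fin: "\<And>n. finite (Gs S n)"
begin

lemma Rn_diff:
  assumes mn: "m \<le> n"
  shows "norm (Rn S n x - Rn S m x) \<le> inverse (real (Suc m)) * norm x"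
proof -
  have "Rn S n x - Rn S m x = (\<Sum>a\<in>Gs S n - Gs S m. (lam S a * coef a x) *\<^sub>R a)"
    unfolding Rn_def by (rule sum_diff[OF fin Gs_mono[OF mn], symmetric])
  also have "norm \<dots> \<le> inverse (real (Suc m)) * norm x"
  proof (rule atom_sum_norm_bound)
    show "finite (Gs S n - Gs S m)" using fin by simp
    show "\<And>b. b \<in> Gs S n - Gs S m \<Longrightarrow> is_atom b" unfolding Gs_def by auto
    show "0 \<le> inverse (real (Suc m))" by simp
    show "\<And>b. b \<in> Gs S n - Gs S m \<Longrightarrow> \<bar>lam S b\<bar> \<le> inverse (real (Suc m))"
      unfolding Gs_def by auto
  qed
  finally show ?thesis .
qed

lemma Rn_Cauchy: "Cauchy (\<lambda>n. Rn S n x)"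
proof (rule CauchyI)
  fix e :: real assume e: "0 < e"
  have "0 < e / (norm x + 1)" using e by (simp add: add_nonneg_pos)
  then obtain M where M: "inverse (real (Suc M)) < e / (norm x + 1)"
    using reals_Archimedean by blast
  have bnd: "inverse (real (Suc M)) * norm x < e"
  proof -
    have "inverse (real (Suc M)) * norm x \<le> inverse (real (Suc M)) * (norm x + 1)"
      by (simp add: mult_left_mono)
    also have "\<dots> < e / (norm x + 1) * (norm x + 1)"
      using M by (intro mult_strict_right_mono) (auto simp: add_nonneg_pos)
    also have "\<dots> = e"
    proof -
      have "norm x + 1 \<noteq> 0" using norm_ge_zero[of x] by linarith
      thus ?thesis by simp
    qed
    finally show ?thesis .
  qed
  have small: "norm (Rn S n x - Rn S m x) < e" if "M \<le> m" "m \<le> n" for m n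
  proof -
    have "inverse (real (Suc m)) \<le> inverse (real (Suc M))" using that(1) by (simp add: le_imp_inverse_le)
    hence "inverse (real (Suc m)) * norm x \<le> inverse (real (Suc M)) * norm x" by (simp add: mult_right_mono)
    thus ?thesis using Rn_diff[OF that(2), of x] bnd by linarith
  qed
  show "\<exists>M. \<forall>m\<ge>M. \<forall>n\<ge>M. norm (Rn S m x - Rn S n x) < e"
  proof (intro exI allI impI)
    fix m n assume "M \<le> m" "M \<le> n"
    thus "norm (Rn S m x - Rn S n x) < e"
      using small[of m n] small[of n m] by (cases "m \<le> n") (auto simp: norm_minus_commute)
  qed
qed

lemma Rn_lim: "(\<lambda>n. Rn S n x) \<longlonglongrightarrow> Rop S x"
  unfolding Rop_def using Rn_Cauchy[of x] by (simp add: Cauchy_convergent_iff convergent_LIMSEQ_iff)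

lemma Rop_approx: "norm (Rop S x - Rn S m x) \<le> inverse (real (Suc m)) * norm x"
proof (rule LIMSEQ_le_const2)
  show "(\<lambda>n. norm (Rn S n x - Rn S m x)) \<longlonglongrightarrow> norm (Rop S x - Rn S m x)"
    by (intro tendsto_norm tendsto_diff Rn_lim tendsto_const)
  show "\<exists>N. \<forall>n\<ge>N. norm (Rn S n x - Rn S m x) \<le> inverse (real (Suc m)) * norm x"
    using Rn_diff by blast
qed

lemma Rn_add: "Rn S n (x + y) = Rn S n x + Rn S n y"
  unfolding Rn_def
  by (simp add: coef_add Gs_atom distrib_left scaleR_add_left sum.distrib[symmetric] cong: sum.cong)

lemma Rn_scale: "Rn S n (r *\<^sub>R x) = r *\<^sub>R Rn S n x"
  unfolding Rn_def
  by (simp add: coef_scale Gs_atom scaleR_sum_right mult.left_commute cong: sum.cong)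

lemma Rop_linear: "linear (Rop S)"
proof (rule linearI)
  fix x y
  have "(\<lambda>n. Rn S n (x + y)) \<longlonglongrightarrow> Rop S x + Rop S y"
    unfolding Rn_add by (intro tendsto_add Rn_lim)
  thus "Rop S (x + y) = Rop S x + Rop S y" using Rn_lim LIMSEQ_unique by blast
next
  fix r x
  have "(\<lambda>n. Rn S n (r *\<^sub>R x)) \<longlonglongrightarrow> r *\<^sub>R Rop S x"
    unfolding Rn_scale by (intro tendsto_scaleR tendsto_const Rn_lim)
  thus "Rop S (r *\<^sub>R x) = r *\<^sub>R Rop S x" using Rn_lim LIMSEQ_unique by blast
qed

lemma c_nonneg: "0 \<le> c" using cb unfolding cbound_def by simp

lemma Rn_labs: "labs (Rn S n x) \<le> c *\<^sub>R labs x"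
  unfolding Rn_def
proof (rule atom_sum_bound)
  show "finite (Gs S n)" by (rule fin)
  show "\<And>b. b \<in> Gs S n \<Longrightarrow> is_atom b" by (rule Gs_atom)
  show "0 \<le> c" by (rule c_nonneg)
  show "\<And>b. b \<in> Gs S n \<Longrightarrow> \<bar>lam S b\<bar> \<le> c" using cbound_atom(2)[OF cb] Gs_atom by blast
qed

lemma Rop_cbound: "cbound (Rop S) c"
proof -
  have "labs (Rop S x) \<le> c *\<^sub>R labs x" for x
    by (rule lim_le[OF tendsto_labs[OF Rn_lim]]) (simp add: Rn_labs)
  thus ?thesis unfolding cbound_def using Rop_linear c_nonneg by blast
qed

lemma Rop_zero_if_dj:
  assumes "\<And>a. is_atom a \<Longrightarrow> dj x a"
  shows "Rop S x = 0"
proof -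
  have "Rn S n x = 0" for n
    unfolding Rn_def using assms by (simp add: coef_of_dj Gs_atom cong: sum.cong)
  hence "(\<lambda>n. Rn S n x) = (\<lambda>n. 0)" by simp
  hence "(\<lambda>n. 0) \<longlonglongrightarrow> Rop S x" using Rn_lim[of x] by simp
  thus ?thesis using LIMSEQ_unique tendsto_const by metis
qed

lemma coef_Rn:
  assumes b: "is_atom b"
  shows "coef b (Rn S n x) = (if b \<in> Gs S n then lam S b * coef b x else 0)"
proof -
  have "coef b (Rn S n x) = (\<Sum>a\<in>Gs S n. lam S a * coef a x * coef b a)"
    unfolding Rn_def by (simp add: coef_sum[OF b fin] coef_scale[OF b])
  also have "\<dots> = (\<Sum>a\<in>Gs S n. if a = b then lam S a * coef a x else 0)"
    by (rule sum.cong) (auto simp: coef_self[OF b] coef_other[OF b] Gs_atom)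
  also have "\<dots> = (if b \<in> Gs S n then lam S b * coef b x else 0)"
    by (simp add: fin)
  finally show ?thesis .
qed

lemma coef_Rop:
  assumes b: "is_atom b"
  shows "coef b (Rop S x) = lam S b * coef b x"
proof -
  have ev: "eventually (\<lambda>n. coef b (Rn S n x) = lam S b * coef b x) sequentially"
  proof (cases "lam S b = 0")
    case True
    have "coef b (Rn S n x) = lam S b * coef b x" for n
      unfolding coef_Rn[OF b] True by simp
    hence "\<forall>n. coef b (Rn S n x) = lam S b * coef b x" by blast
    thus ?thesis by (rule always_eventually)
  next
    case False
    hence "0 < \<bar>lam S b\<bar>" by simp
    then obtain N where N: "inverse (real (Suc N)) < \<bar>lam S b\<bar>" using reals_Archimedean by blast
    show ?thesis
    proof (rule eventually_sequentiallyI[of N])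
      fix n assume "N \<le> n"
      hence "b \<in> Gs S n" using N b Gs_mono[of N n S] unfolding Gs_def by auto
      thus "coef b (Rn S n x) = lam S b * coef b x" by (simp add: coef_Rn[OF b])
    qed
  qed
  have t: "(\<lambda>n. coef b (Rn S n x)) \<longlonglongrightarrow> coef b (Rop S x)" by (rule tendsto_coef[OF b Rn_lim])
  have "(\<lambda>n. lam S b * coef b x) \<longlonglongrightarrow> coef b (Rop S x)"
    by (rule tendsto_cong[OF ev, THEN iffD1, OF t])
  thus ?thesis using LIMSEQ_unique tendsto_const by metis
qed

lemma Rop_dj:
  assumes "\<And>a. is_atom a \<Longrightarrow> dj a u"
  shows "dj (Rop S x) u"
proof (rule dj_lim[OF Rn_lim])
  show "eventually (\<lambda>n. dj (Rn S n x) u) sequentially"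
    unfolding Rn_def using assms fin
    by (intro always_eventually allI dj_sum dj_scale) (auto simp: Gs_atom)
qed

lemma Rop_eq:
  assumes H: "\<And>u. (\<And>a. is_atom a \<Longrightarrow> dj u a) \<Longrightarrow> dj x u"
  shows "S x = Rop S x"
proof -
  define d where "d = S x - Rop S x"
  have "coef b d = 0" if b: "is_atom b" for b
    unfolding d_def using coef_cbound[OF cb b] coef_Rop[OF b] by (simp add: coef_diff[OF b])
  hence db: "dj d b" if "is_atom b" for b using coef_dj[OF that, of d] that by simp
  have dx: "dj x d" by (rule H[OF db])
  have "labs (S x) \<le> c *\<^sub>R labs x" using cb unfolding cbound_def by blast
  hence d1: "dj (S x) d" using dx by (rule dj_le)
  have d2: "dj (Rop S x) d" by (rule Rop_dj) (rule dj_sym[OF db])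
  have "dj (S x - Rop S x) d" using d1 d2 by (rule dj_diff)
  hence "dj d d" unfolding d_def .
  hence "d = 0" by (rule dj_self)
  thus ?thesis unfolding d_def by simp
qed

end


primrec fsup :: "nat \<Rightarrow> (nat \<Rightarrow> 'a::lattice) \<Rightarrow> 'a" where
  "fsup 0 h = h 0"
| "fsup (Suc m) h = sup (fsup m h) (h (Suc m))"

lemma fsup_ge: "k \<le> m \<Longrightarrow> h k \<le> fsup m h"
proof (induction m)
  case 0 thus ?case by simp
next
  case (Suc m)
  show ?case
  proof (cases "k = Suc m")
    case True thus ?thesis by simp
  next
    case False
    hence "k \<le> m" using Suc.prems by simp
    hence "h k \<le> fsup m h" by (rule Suc.IH)
    thus ?thesis by (simp add: le_supI1)
  qed
qed

lemma fsup_least: "(\<And>k. k \<le> m \<Longrightarrow> h k \<le> v) \<Longrightarrow> fsup m h \<le> v"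
  by (induction m) auto

definition ftheta :: "'a::real_banach_lattice \<Rightarrow> 'a \<Rightarrow> real \<Rightarrow> 'a" where
  "ftheta x y t = cos t *\<^sub>R x + sin t *\<^sub>R y"

lemma abs_cos_diff: "\<bar>cos a - cos b\<bar> \<le> \<bar>a - (b::real)\<bar>"
proof -
  have "\<bar>cos a - cos b\<bar> = 2 * \<bar>sin ((a + b) / 2)\<bar> * \<bar>sin ((b - a) / 2)\<bar>"
    by (simp add: cos_diff_cos abs_mult)
  also have "\<dots> \<le> 2 * 1 * \<bar>(b - a) / 2\<bar>"
    by (intro mult_mono abs_sin_x_le_abs_x) auto
  also have "\<dots> = \<bar>a - b\<bar>" by simp
  finally show ?thesis .
qed

lemma abs_sin_diff: "\<bar>sin a - sin b\<bar> \<le> \<bar>a - (b::real)\<bar>"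
proof -
  have "\<bar>sin a - sin b\<bar> = 2 * \<bar>sin ((a - b) / 2)\<bar> * \<bar>cos ((a + b) / 2)\<bar>"
    by (simp add: sin_diff_sin abs_mult)
  also have "\<dots> \<le> 2 * \<bar>(a - b) / 2\<bar> * 1"
    by (intro mult_mono abs_sin_x_le_abs_x) auto
  also have "\<dots> = \<bar>a - b\<bar>" by simp
  finally show ?thesis .
qed

lemma ftheta_lip:
  fixes x y :: "'a::real_banach_lattice"
  shows "ftheta x y t - ftheta x y s \<le> \<bar>t - s\<bar> *\<^sub>R (labs x + labs y)"
proof -
  have "ftheta x y t - ftheta x y s = (cos t - cos s) *\<^sub>R x + (sin t - sin s) *\<^sub>R y"
    unfolding ftheta_def by (simp add: scaleR_diff_left algebra_simps)
  also have "\<dots> \<le> \<bar>cos t - cos s\<bar> *\<^sub>R labs x + \<bar>sin t - sin s\<bar> *\<^sub>R labs y"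
    by (intro add_mono scaleR_le_labs)
  also have "\<dots> \<le> \<bar>t - s\<bar> *\<^sub>R labs x + \<bar>t - s\<bar> *\<^sub>R labs y"
    by (intro add_mono scaleR_right_mono abs_cos_diff abs_sin_diff labs_nonneg)
  also have "\<dots> = \<bar>t - s\<bar> *\<^sub>R (labs x + labs y)" by (simp add: scaleR_add_right)
  finally show ?thesis .
qed

lemma ftheta_periodic: "ftheta x y (t + real_of_int q * (2 * pi)) = ftheta x y t"
proof -
  have c: "cos (real_of_int q * (2 * pi)) = 1" using cos_int_2pin[of q] by (simp add: mult.commute)
  have s: "sin (real_of_int q * (2 * pi)) = 0" using sin_int_2pin[of q] by (simp add: mult.commute)
  show ?thesis unfolding ftheta_def by (simp add: cos_add sin_add c s)
qed

definition dl :: "nat \<Rightarrow> real" where "dl n = 2 * pi * (1/2) ^ n"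

definition ssq :: "'a::real_banach_lattice \<Rightarrow> 'a \<Rightarrow> nat \<Rightarrow> 'a" where
  "ssq x y n = fsup (2 ^ n) (\<lambda>k. ftheta x y (real k * dl n))"

lemma dl_pos: "0 < dl n" unfolding dl_def by simp

lemma dl_Suc: "dl (Suc n) = dl n / 2" unfolding dl_def by simp

lemma dl_pow: "real (2 ^ n) * dl n = 2 * pi"
  unfolding dl_def by (simp add: power_one_over field_simps)

lemma dl_lim: "dl \<longlonglongrightarrow> 0"
proof -
  have "(\<lambda>n. (1/2::real) ^ n) \<longlonglongrightarrow> 0" by (rule LIMSEQ_realpow_zero) auto
  hence "(\<lambda>n. 2 * pi * (1/2::real) ^ n) \<longlonglongrightarrow> 2 * pi * 0" by (intro tendsto_mult tendsto_const)
  thus ?thesis unfolding dl_def[abs_def] by simp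
qed

lemma dl_mono: "n \<le> m \<Longrightarrow> dl m \<le> dl n"
  unfolding dl_def by (intro mult_left_mono power_decreasing) auto

lemma ftheta_le_ssq:
  fixes x y :: "'a::real_banach_lattice"
  shows "ftheta x y t \<le> ssq x y n + dl n *\<^sub>R (labs x + labs y)"
proof -
  let ?d = "dl n" and ?w = "labs x + labs y"
  define j where "j = floor (t / ?d)"
  have dp: "0 < ?d" by (rule dl_pos)
  have "real_of_int j \<le> t / ?d" unfolding j_def by (rule of_int_floor_le)
  hence j1: "real_of_int j * ?d \<le> t" using pos_le_divide_eq[OF dp] by blast
  have "t / ?d < real_of_int j + 1" unfolding j_def by (rule real_of_int_floor_add_one_gt)
  hence j2: "t < (real_of_int j + 1) * ?d" using pos_divide_less_eq[OF dp] by blast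
  define N :: int where "N = 2 ^ n"
  have Np: "0 < N" unfolding N_def by simp
  define k where "k = j mod N"
  define q where "q = j div N"
  have jk: "j = q * N + k" unfolding k_def q_def by simp
  have k0: "0 \<le> k" and kN: "k < N" unfolding k_def using Np by auto
  have "real_of_int j * ?d = real_of_int k * ?d + real_of_int q * (real_of_int N * ?d)"
    unfolding jk by (simp add: algebra_simps)
  also have "real_of_int N * ?d = 2 * pi" unfolding N_def using dl_pow[of n] by simp
  finally have jd: "real_of_int j * ?d = real_of_int k * ?d + real_of_int q * (2 * pi)" .
  have "ftheta x y (real_of_int j * ?d) = ftheta x y (real (nat k) * ?d)"
    unfolding jd using k0 by (simp add: ftheta_periodic)
  also have "\<dots> \<le> ssq x y n" unfolding ssq_def
    by (rule fsup_ge[of "nat k" "2 ^ n" "\<lambda>k. ftheta x y (real k * dl n)"]) (use kN N_def in auto)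
  finally have a: "ftheta x y (real_of_int j * ?d) \<le> ssq x y n" .
  have "ftheta x y t - ftheta x y (real_of_int j * ?d) \<le> \<bar>t - real_of_int j * ?d\<bar> *\<^sub>R ?w"
    by (rule ftheta_lip)
  also have "\<dots> \<le> ?d *\<^sub>R ?w"
    using j1 j2 by (intro scaleR_right_mono add_nonneg_nonneg labs_nonneg) (auto simp: algebra_simps)
  finally have b: "ftheta x y t - ftheta x y (real_of_int j * ?d) \<le> ?d *\<^sub>R ?w" .
  from b have "ftheta x y t \<le> ?d *\<^sub>R ?w + ftheta x y (real_of_int j * ?d)" by (simp only: diff_le_eq)
  also have "\<dots> \<le> ?d *\<^sub>R ?w + ssq x y n" using a by (rule add_left_mono)
  finally show ?thesis by (simp only: add.commute)
qed

lemma ssq_Suc: "ssq x y n \<le> ssq x y (Suc n)"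
  unfolding ssq_def
proof (rule fsup_least)
  fix k :: nat assume k: "k \<le> 2 ^ n"
  have e: "real k * dl n = real (2 * k) * dl (Suc n)" by (simp add: dl_Suc)
  have "ftheta x y (real k * dl n) = ftheta x y (real (2 * k) * dl (Suc n))" by (simp only: e)
  also have "\<dots> \<le> fsup (2 ^ Suc n) (\<lambda>k. ftheta x y (real k * dl (Suc n)))"
    by (rule fsup_ge[of "2 * k" "2 ^ Suc n" "\<lambda>k. ftheta x y (real k * dl (Suc n))"]) (use k in auto)
  finally show "ftheta x y (real k * dl n) \<le> fsup (2 ^ Suc n) (\<lambda>k. ftheta x y (real k * dl (Suc n)))" .
qed

lemma ssq_mono: "n \<le> m \<Longrightarrow> ssq x y n \<le> ssq x y m"
  by (rule lift_Suc_mono_le[of "ssq x y"]) (auto intro: ssq_Suc)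

lemma ssq_le: "ssq x y m \<le> ssq x y n + dl n *\<^sub>R (labs x + labs y)"
  unfolding ssq_def[of x y m] by (rule fsup_least) (rule ftheta_le_ssq)

lemma ssq_Cauchy:
  fixes x y :: "'a::real_banach_lattice"
  shows "Cauchy (ssq x y)"
proof (rule CauchyI)
  fix e :: real assume e: "0 < e"
  let ?w = "labs x + labs y"
  have "(\<lambda>n. dl n * norm ?w) \<longlonglongrightarrow> 0 * norm ?w" by (intro tendsto_mult dl_lim tendsto_const)
  hence "eventually (\<lambda>n. dl n * norm ?w < e) sequentially"
    using e by (simp add: order_tendsto_iff)
  then obtain M where M: "\<And>n. M \<le> n \<Longrightarrow> dl n * norm ?w < e" unfolding eventually_sequentially by blast
  have small: "norm (ssq x y m - ssq x y n) < e" if "M \<le> n" "n \<le> m" for m n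
  proof -
    have "0 \<le> ssq x y m - ssq x y n" using ssq_mono[OF that(2)] by simp
    moreover have "ssq x y m - ssq x y n \<le> dl n *\<^sub>R ?w" using ssq_le[of x y m n] by (simp add: diff_le_eq add.commute)
    ultimately have "norm (ssq x y m - ssq x y n) \<le> norm (dl n *\<^sub>R ?w)" by (rule norm_mono_pos)
    also have "\<dots> = dl n * norm ?w" using dl_pos[of n] by simp
    finally show ?thesis using M[OF that(1)] by linarith
  qed
  show "\<exists>M. \<forall>m\<ge>M. \<forall>n\<ge>M. norm (ssq x y m - ssq x y n) < e"
  proof (intro exI allI impI)
    fix m n assume "M \<le> m" "M \<le> n"
    thus "norm (ssq x y m - ssq x y n) < e"
      using small[of n m] small[of m n] by (cases "n \<le> m") (auto simp: norm_minus_commute)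
  qed
qed

lemma cabs_exists:
  fixes x y :: "'a::real_banach_lattice"
  shows "\<exists>u. (\<forall>t. ftheta x y t \<le> u) \<and> (\<forall>v. (\<forall>t. ftheta x y t \<le> v) \<longrightarrow> u \<le> v)"
proof -
  let ?w = "labs x + labs y"
  obtain L where L: "ssq x y \<longlonglongrightarrow> L"
    using ssq_Cauchy[of x y] by (auto simp: Cauchy_convergent_iff convergent_def)
  have sL: "ssq x y n \<le> L" for n
  proof (rule lim_ge[OF L])
    show "eventually (\<lambda>m. ssq x y n \<le> ssq x y m) sequentially"
      unfolding eventually_sequentially using ssq_mono by blast
  qed
  have up: "ftheta x y t \<le> L" for t
  proof -
    have "ftheta x y t - L \<le> dl n *\<^sub>R ?w" for n
    proof -
      have "ftheta x y t \<le> ssq x y n + dl n *\<^sub>R ?w" by (rule ftheta_le_ssq)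
      also have "\<dots> \<le> L + dl n *\<^sub>R ?w" using sL[of n] by (rule add_right_mono)
      finally have "ftheta x y t \<le> dl n *\<^sub>R ?w + L" by (simp only: add.commute)
      thus "ftheta x y t - L \<le> dl n *\<^sub>R ?w" by (simp only: diff_le_eq)
    qed
    moreover have "(\<lambda>n. dl n *\<^sub>R ?w) \<longlonglongrightarrow> 0"
      using tendsto_scaleR[OF dl_lim tendsto_const[of ?w]] by simp
    ultimately have "ftheta x y t - L \<le> 0"
      using lim_ge[of "\<lambda>n. dl n *\<^sub>R ?w" 0 "ftheta x y t - L"] by simp
    thus ?thesis by simp
  qed
  have least: "L \<le> v" if "\<forall>t. ftheta x y t \<le> v" for v
  proof (rule lim_le[OF L])
    show "eventually (\<lambda>n. ssq x y n \<le> v) sequentially"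
      unfolding ssq_def using that by (intro always_eventually allI fsup_least) auto
  qed
  show ?thesis using up least by blast
qed

lemma cabs_char:
  fixes x y :: "'a::real_banach_lattice"
  shows "\<And>t. ftheta x y t \<le> cabs (x, y)"
    and "\<And>v. (\<And>t. ftheta x y t \<le> v) \<Longrightarrow> cabs (x, y) \<le> v"
proof -
  let ?P = "\<lambda>u. (\<forall>t. ftheta x y t \<le> u) \<and> (\<forall>v. (\<forall>t. ftheta x y t \<le> v) \<longrightarrow> u \<le> v)"
  have ex1: "\<exists>!u. ?P u"
  proof -
    obtain u where pu: "?P u" using cabs_exists[of x y] by blast
    have uniq: "u' = u" if h: "?P u'" for u'
    proof -
      have p: "?P u" by fact
      have 1: "u' \<le> u" using h p by blast
      have 2: "u \<le> u'" using h p by blast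
      from 1 2 show ?thesis by (rule order_antisym)
    qed
    show ?thesis using pu uniq by (rule ex1I)
  qed
  have "cabs (x, y) = (THE u. ?P u)" unfolding cabs_def ftheta_def by simp
  hence P: "?P (cabs (x, y))" using theI'[OF ex1] by simp
  show "\<And>t. ftheta x y t \<le> cabs (x, y)" using P by blast
  show "\<And>v. (\<And>t. ftheta x y t \<le> v) \<Longrightarrow> cabs (x, y) \<le> v" using P by blast
qed

lemma cabs_ge1: "labs (x::'a::real_banach_lattice) \<le> cabs (x, y)"
proof -
  have "x \<le> cabs (x, y)" using cabs_char(1)[of x y 0] unfolding ftheta_def by simp
  moreover have "- x \<le> cabs (x, y)" using cabs_char(1)[of x y pi] unfolding ftheta_def by simp
  ultimately show ?thesis unfolding labs_le_iff by simp
qed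

lemma cabs_ge2: "labs (y::'a::real_banach_lattice) \<le> cabs (x, y)"
proof -
  have "y \<le> cabs (x, y)" using cabs_char(1)[of x y "pi/2"] unfolding ftheta_def by simp
  moreover have "- y \<le> cabs (x, y)" using cabs_char(1)[of x y "- (pi/2)"] unfolding ftheta_def by simp
  ultimately show ?thesis unfolding labs_le_iff by simp
qed

lemma cabs_real: "cabs ((u::'a::real_banach_lattice), 0) = labs u"
proof (rule order_antisym)
  show "cabs (u, 0) \<le> labs u"
  proof (rule cabs_char(2))
    fix t
    have "cos t *\<^sub>R u \<le> \<bar>cos t\<bar> *\<^sub>R labs u" by (rule scaleR_le_labs)
    also have "\<dots> \<le> 1 *\<^sub>R labs u" by (intro scaleR_right_mono labs_nonneg) simp
    finally show "ftheta u 0 t \<le> labs u" unfolding ftheta_def by simp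
  qed
  show "labs u \<le> cabs (u, 0)" by (rule cabs_ge1)
qed


lemma inf_zero_below:
  fixes u C w :: "'a::real_banach_lattice"
  assumes "0 \<le> u" "u \<le> C" "inf C w = 0" "0 \<le> w"
  shows "inf u w = 0"
proof -
  have "inf u w \<le> inf C w" using assms(2) by (rule inf_mono) simp
  hence "inf u w \<le> 0" using assms(3) by simp
  moreover have "0 \<le> inf u w" using assms(1,4) by simp
  ultimately show ?thesis by (rule order_antisym)
qed

lemma A_mem: "is_atom a \<Longrightarrow> (a, 0) \<in> norm_one_pos_atoms"
  unfolding norm_one_pos_atoms_def is_atom_def cnorm_def by (simp add: cabs_real norm_labs)

lemma A_cases: "w \<in> norm_one_pos_atoms \<Longrightarrow> \<exists>a. is_atom a \<and> w = (a, 0)"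
proof -
  assume w: "w \<in> norm_one_pos_atoms"
  obtain a b where ab: "w = (a, b)" by (cases w)
  have b: "b = 0" using w ab unfolding norm_one_pos_atoms_def by simp
  have "is_atom a" using w unfolding ab b norm_one_pos_atoms_def is_atom_def cnorm_def
    by (simp add: cabs_real norm_labs)
  thus ?thesis using ab b by blast
qed

lemma dc1:
  assumes z: "z \<in> disj_compl norm_one_pos_atoms" and a: "is_atom a"
  shows "dj (fst z) a" "dj (snd z) a"
proof -
  obtain x y where xy: "z = (x, y)" by (cases z)
  have i: "inf (cabs z) a = 0" using z A_mem[OF a] unfolding disj_compl_def
    by (auto simp: cabs_real atom_labs[OF a])
  have "inf (labs x) a = 0"
    using labs_nonneg cabs_ge1[of x y] i atom_nonneg[OF a] unfolding xy by (rule inf_zero_below)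
  thus "dj (fst z) a" unfolding dj_def xy by (simp add: atom_labs[OF a])
  have "inf (labs y) a = 0"
    using labs_nonneg cabs_ge2[of y x] i atom_nonneg[OF a] unfolding xy by (rule inf_zero_below)
  thus "dj (snd z) a" unfolding dj_def xy by (simp add: atom_labs[OF a])
qed

lemma dc_real:
  fixes u :: "'a::real_banach_lattice"
  assumes "\<And>a. is_atom a \<Longrightarrow> dj u a"
  shows "(u, 0) \<in> disj_compl norm_one_pos_atoms"
  unfolding disj_compl_def
proof (intro CollectI ballI)
  fix w :: "'a \<times> 'a" assume "w \<in> norm_one_pos_atoms"
  then obtain a where a: "is_atom a" "w = (a, 0)" using A_cases by blast
  show "inf (cabs (u, 0)) (cabs w) = 0" using assms[OF a(1)] unfolding a(2) dj_def
    by (simp add: cabs_real)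
qed

lemma dc2:
  assumes z: "z \<in> disj_compl (disj_compl norm_one_pos_atoms)"
    and u: "\<And>a. is_atom a \<Longrightarrow> dj u a"
  shows "dj (fst z) u" "dj (snd z) u"
proof -
  obtain x y where xy: "z = (x, y)" by (cases z)
  have "inf (cabs z) (cabs (u, 0)) = 0" using z dc_real[OF u] unfolding disj_compl_def[of "disj_compl norm_one_pos_atoms"]
    by blast
  hence i: "inf (cabs z) (labs u) = 0" by (simp add: cabs_real)
  have "inf (labs x) (labs u) = 0"
    using labs_nonneg cabs_ge1[of x y] i labs_nonneg unfolding xy by (rule inf_zero_below)
  thus "dj (fst z) u" unfolding dj_def xy by simp
  have "inf (labs y) (labs u) = 0"
    using labs_nonneg cabs_ge2[of y x] i labs_nonneg unfolding xy by (rule inf_zero_below)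
  thus "dj (snd z) u" unfolding dj_def xy by simp
qed

lemma atom_dd:
  fixes a :: "'a::real_banach_lattice"
  assumes a: "is_atom a"
  shows "(a, 0) \<in> disj_compl (disj_compl norm_one_pos_atoms)"
  unfolding disj_compl_def[of "disj_compl norm_one_pos_atoms"]
proof (intro CollectI ballI)
  fix w :: "'a \<times> 'a" assume w: "w \<in> disj_compl norm_one_pos_atoms"
  have "inf (cabs w) (cabs (a, 0)) = 0" using w A_mem[OF a] unfolding disj_compl_def by blast
  thus "inf (cabs (a, 0)) (cabs w) = 0" by (simp add: inf.commute)
qed

lemma cnorm_fst: "cnorm z \<le> 1 \<Longrightarrow> norm (fst z) \<le> 1"
  and cnorm_snd: "cnorm z \<le> 1 \<Longrightarrow> norm (snd z) \<le> 1"
proof -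
  assume c: "cnorm z \<le> 1"
  obtain x y where xy: "z = (x, y)" by (cases z)
  have "norm (labs x) \<le> norm (cabs z)" unfolding xy by (rule norm_mono_pos[OF labs_nonneg cabs_ge1])
  thus "norm (fst z) \<le> 1" using c unfolding cnorm_def xy by (simp add: norm_labs)
  have "norm (labs y) \<le> norm (cabs z)" unfolding xy by (rule norm_mono_pos[OF labs_nonneg cabs_ge2])
  thus "norm (snd z) \<le> 1" using c unfolding cnorm_def xy by (simp add: norm_labs)
qed

section \<open>Finiteness from compactness\<close>

lemma subsingleton_finite: "(\<And>a b. a \<in> Y \<Longrightarrow> b \<in> Y \<Longrightarrow> a = b) \<Longrightarrow> finite Y"
proof (cases "Y = {}")
  case False
  then obtain y where y: "y \<in> Y" by blast
  assume "\<And>a b. a \<in> Y \<Longrightarrow> b \<in> Y \<Longrightarrow> a = b"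
  hence "Y \<subseteq> {y}" using y by blast
  thus ?thesis using finite_subset by blast
qed simp

lemma sep_finite:
  fixes g :: "'b \<Rightarrow> 'c::metric_space"
  assumes K: "compact K" and gK: "\<And>a. a \<in> X \<Longrightarrow> g a \<in> K" and e: "0 < e"
    and sep: "\<And>a b. a \<in> X \<Longrightarrow> b \<in> X \<Longrightarrow> a \<noteq> b \<Longrightarrow> e \<le> dist (g a) (g b)"
  shows "finite X"
proof -
  have "0 < e / 2" using e by simp
  then obtain k where k: "finite k" "K \<subseteq> (\<Union>p\<in>k. ball p (e / 2))"
    using K unfolding compact_eq_totally_bounded by blast
  have sub: "X \<subseteq> (\<Union>p\<in>k. {a \<in> X. g a \<in> ball p (e / 2)})" using k(2) gK by blast
  have "finite {a \<in> X. g a \<in> ball p (e / 2)}" for p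
  proof (rule subsingleton_finite)
    fix a b assume a: "a \<in> {a \<in> X. g a \<in> ball p (e / 2)}" and b: "b \<in> {a \<in> X. g a \<in> ball p (e / 2)}"
    show "a = b"
    proof (rule ccontr)
      assume "a \<noteq> b"
      hence "e \<le> dist (g a) (g b)" using a b sep by blast
      moreover have "dist (g a) (g b) \<le> dist p (g a) + dist p (g b)" by (rule dist_triangle3)
      moreover have "dist p (g a) < e / 2" "dist p (g b) < e / 2" using a b by auto
      ultimately show False by linarith
    qed
  qed
  hence "finite (\<Union>p\<in>k. {a \<in> X. g a \<in> ball p (e / 2)})" using k(1) by blast
  thus ?thesis using sub finite_subset by blast
qed

lemma atom_sep:
  fixes a b :: "'a::real_banach_lattice"
  assumes a: "is_atom a" and b: "is_atom b" and ne: "a \<noteq> b"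
  shows "\<bar>s\<bar> \<le> norm (s *\<^sub>R a - t *\<^sub>R b)"
proof -
  have "coef a (s *\<^sub>R a - t *\<^sub>R b) = s"
    by (simp add: coef_diff[OF a] coef_scale[OF a] coef_self[OF a] coef_other[OF a b ne])
  thus ?thesis using coef_abs_le_norm[OF a, of "s *\<^sub>R a - t *\<^sub>R b"] by simp
qed

lemma center_fin:
  fixes T :: "'a::real_banach_lattice \<times> 'a \<Rightarrow> 'a \<times> 'a"
  assumes TS: "\<And>x y. T (x, y) = (S1 x - S2 y, S2 x + S1 y)"
    and c1: "cbound S1 c1" and c2: "cbound S2 c2"
    and comp: "compact_on T (disj_compl (disj_compl norm_one_pos_atoms))"
  shows "finite (Gs S1 n)" "finite (Gs S2 n)"
proof -
  let ?B = "{z \<in> disj_compl (disj_compl norm_one_pos_atoms). cnorm z \<le> 1}"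
  let ?K = "closure (T ` ?B)"
  have K: "compact ?K" using comp unfolding compact_on_def .
  have e: "0 < inverse (real (Suc n))" by simp
  have inK: "T (a, 0) \<in> ?K" if a: "is_atom a" for a
  proof -
    have "cnorm (a, 0) \<le> 1" unfolding cnorm_def using atom_norm[OF a] by (simp add: cabs_real norm_labs)
    hence "(a, 0) \<in> ?B" using atom_dd[OF a] by blast
    hence "T (a, 0) \<in> T ` ?B" by (rule imageI)
    thus ?thesis by (rule closure_subset[THEN subsetD])
  qed
  have S10: "S1 0 = 0" using linear_0[OF cbound_linear[OF c1]] .
  have S20: "S2 0 = 0" using linear_0[OF cbound_linear[OF c2]] .
  have Ta: "T (a, 0) = (lam S1 a *\<^sub>R a, lam S2 a *\<^sub>R a)" if "is_atom a" for a
    using TS[of a 0] S10 S20 cbound_atom(1)[OF c1 that] cbound_atom(1)[OF c2 that] by simp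
  show "finite (Gs S1 n)"
  proof (rule sep_finite[OF K _ e])
    show "\<And>a. a \<in> Gs S1 n \<Longrightarrow> T (a, 0) \<in> ?K" using inK Gs_atom by blast
    fix a b assume a: "a \<in> Gs S1 n" and b: "b \<in> Gs S1 n" and ne: "a \<noteq> b"
    have aa: "is_atom a" and ab: "is_atom b" using a b Gs_atom by auto
    have "inverse (real (Suc n)) \<le> \<bar>lam S1 a\<bar>" using a unfolding Gs_def by simp
    also have "\<dots> \<le> norm (lam S1 a *\<^sub>R a - lam S1 b *\<^sub>R b)" by (rule atom_sep[OF aa ab ne])
    also have "\<dots> \<le> norm (T (a, 0) - T (b, 0))" unfolding Ta[OF aa] Ta[OF ab]
      using norm_fst_le[of "lam S1 a *\<^sub>R a - lam S1 b *\<^sub>R b" "lam S2 a *\<^sub>R a - lam S2 b *\<^sub>R b"] by simp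
    finally show "inverse (real (Suc n)) \<le> dist (T (a, 0)) (T (b, 0))" by (simp add: dist_norm)
  qed
  show "finite (Gs S2 n)"
  proof (rule sep_finite[OF K _ e])
    show "\<And>a. a \<in> Gs S2 n \<Longrightarrow> T (a, 0) \<in> ?K" using inK Gs_atom by blast
    fix a b assume a: "a \<in> Gs S2 n" and b: "b \<in> Gs S2 n" and ne: "a \<noteq> b"
    have aa: "is_atom a" and ab: "is_atom b" using a b Gs_atom by auto
    have "inverse (real (Suc n)) \<le> \<bar>lam S2 a\<bar>" using a unfolding Gs_def by simp
    also have "\<dots> \<le> norm (lam S2 a *\<^sub>R a - lam S2 b *\<^sub>R b)" by (rule atom_sep[OF aa ab ne])
    also have "\<dots> \<le> norm (T (a, 0) - T (b, 0))" unfolding Ta[OF aa] Ta[OF ab]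
      using norm_snd_le[of "lam S2 a *\<^sub>R a - lam S2 b *\<^sub>R b" "lam S1 a *\<^sub>R a - lam S1 b *\<^sub>R b"] by simp
    finally show "inverse (real (Suc n)) \<le> dist (T (a, 0)) (T (b, 0))" by (simp add: dist_norm)
  qed
qed

lemma cbound_diff:
  assumes S: "cbound S c" and R: "cbound R d"
  shows "cbound (\<lambda>x. S x - R x) (c + d)"
proof -
  have lS: "linear S" and lR: "linear R" using S R by (auto intro: cbound_linear)
  have lin: "linear (\<lambda>x. S x - R x)"
    by (rule linearI) (simp_all add: linear_add[OF lS] linear_add[OF lR] linear_scale[OF lS]
        linear_scale[OF lR] scaleR_diff_right)
  have "labs (S x - R x) \<le> (c + d) *\<^sub>R labs x" for x
  proof -
    have "labs (S x - R x) \<le> labs (S x) + labs (R x)" by (rule labs_diff)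
    also have "\<dots> \<le> c *\<^sub>R labs x + d *\<^sub>R labs x"
      using S R unfolding cbound_def by (intro add_mono) blast+
    also have "\<dots> = (c + d) *\<^sub>R labs x" by (simp add: scaleR_add_left)
    finally show ?thesis .
  qed
  moreover have "0 \<le> c + d" using S R unfolding cbound_def by simp
  ultimately show ?thesis unfolding cbound_def using lin by blast
qed


primrec Qs :: "'a::real_normed_vector list \<Rightarrow> real \<Rightarrow> 'a set" where
  "Qs [] M = {0}"
| "Qs (a # as) M = {p + q | p q. p \<in> (\<lambda>t. t *\<^sub>R a) ` {-M..M} \<and> q \<in> Qs as M}"

lemma compact_Qs: "compact (Qs as M)"
proof (induction as)
  case Nil thus ?case by simp
next
  case (Cons a as)
  have "compact ((\<lambda>t. t *\<^sub>R a) ` {-M..M})"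
    by (rule compact_continuous_image) (auto intro!: continuous_intros)
  thus ?case using Cons.IH by (simp add: compact_sums)
qed

lemma mem_Qs:
  assumes "distinct as" "\<And>a. a \<in> set as \<Longrightarrow> \<bar>\<alpha> a\<bar> \<le> M"
  shows "(\<Sum>a\<in>set as. \<alpha> a *\<^sub>R a) \<in> Qs as M"
  using assms
proof (induction as)
  case Nil thus ?case by simp
next
  case (Cons a as)
  have na: "a \<notin> set as" using Cons.prems(1) by simp
  have q: "(\<Sum>a\<in>set as. \<alpha> a *\<^sub>R a) \<in> Qs as M" using Cons by simp
  have "\<bar>\<alpha> a\<bar> \<le> M" using Cons.prems(2)[of a] by simp
  hence "\<alpha> a \<in> {-M..M}" by (simp add: abs_le_iff)
  hence p: "\<alpha> a *\<^sub>R a \<in> (\<lambda>t. t *\<^sub>R a) ` {-M..M}" by (rule imageI)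
  have "(\<Sum>a\<in>set (a # as). \<alpha> a *\<^sub>R a) = \<alpha> a *\<^sub>R a + (\<Sum>a\<in>set as. \<alpha> a *\<^sub>R a)"
    using na by simp
  thus ?case using p q by auto
qed

lemma (in rdata) Rn_in_Qs:
  assumes xs: "set xs = Gs S n" "distinct xs" and x: "norm x \<le> 1"
  shows "Rn S n x \<in> Qs xs c"
proof -
  have "Rn S n x = (\<Sum>a\<in>set xs. (lam S a * coef a x) *\<^sub>R a)" unfolding Rn_def xs(1) ..
  also have "\<dots> \<in> Qs xs c"
  proof (rule mem_Qs[OF xs(2)])
    fix a assume "a \<in> set xs"
    hence a: "is_atom a" using xs(1) Gs_atom by blast
    have "\<bar>lam S a * coef a x\<bar> = \<bar>lam S a\<bar> * \<bar>coef a x\<bar>" by (simp add: abs_mult)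
    also have "\<dots> \<le> c * 1"
      using cbound_atom(2)[OF cb a] coef_abs_le_norm[OF a, of x] x c_nonneg
      by (intro mult_mono) auto
    finally show "\<bar>lam S a * coef a x\<bar> \<le> c" by simp
  qed
  finally show ?thesis .
qed

lemma T1_compact:
  fixes S1 S2 :: "'a::real_banach_lattice \<Rightarrow> 'a"
  assumes r1: "rdata S1 c1" and r2: "rdata S2 c2"
  shows "compact_on (\<lambda>z. (Rop S1 (fst z) - Rop S2 (snd z), Rop S2 (fst z) + Rop S1 (snd z))) UNIV"
proof -
  define T1 where "T1 = (\<lambda>z::'a \<times> 'a. (Rop S1 (fst z) - Rop S2 (snd z), Rop S2 (fst z) + Rop S1 (snd z)))"
  let ?B = "{z \<in> UNIV. cnorm z \<le> 1}"
  have tb: "\<exists>k. finite k \<and> T1 ` ?B \<subseteq> (\<Union>p\<in>k. ball p e)" if e: "0 < e" for e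
  proof -
    have "0 < e / 8" using e by simp
    then obtain n where n: "inverse (real (Suc n)) < e / 8" using reals_Archimedean by blast
    obtain xs1 where xs1: "set xs1 = Gs S1 n" "distinct xs1"
      using finite_distinct_list[OF rdata.fin[OF r1]] by blast
    obtain xs2 where xs2: "set xs2 = Gs S2 n" "distinct xs2"
      using finite_distinct_list[OF rdata.fin[OF r2]] by blast
    let ?Q1 = "Qs xs1 c1" and ?Q2 = "Qs xs2 c2"
    let ?P = "{p - q | p q. p \<in> ?Q1 \<and> q \<in> ?Q2} \<times> {p + q | p q. p \<in> ?Q2 \<and> q \<in> ?Q1}"
    have cP: "compact ?P"
      by (intro compact_Times compact_differences compact_sums compact_Qs)
    have "0 < e / 2" using e by simp
    then obtain k where k: "finite k" "?P \<subseteq> (\<Union>p\<in>k. ball p (e / 2))"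
      using cP unfolding compact_eq_totally_bounded by blast
    have "T1 z \<in> (\<Union>p\<in>k. ball p e)" if z: "z \<in> ?B" for z
    proof -
      obtain x y where xy: "z = (x, y)" by (cases z)
      have nx: "norm x \<le> 1" and ny: "norm y \<le> 1"
        using z cnorm_fst[of z] cnorm_snd[of z] unfolding xy by auto
      define w where "w = (Rn S1 n x - Rn S2 n y, Rn S2 n x + Rn S1 n y)"
      have m1: "Rn S1 n x - Rn S2 n y \<in> {p - q | p q. p \<in> ?Q1 \<and> q \<in> ?Q2}"
        apply (rule CollectI)
        apply (rule exI[of _ "Rn S1 n x"])
        apply (rule exI[of _ "Rn S2 n y"])
        using rdata.Rn_in_Qs[OF r1 xs1 nx] rdata.Rn_in_Qs[OF r2 xs2 ny] by simp
      have m2: "Rn S2 n x + Rn S1 n y \<in> {p + q | p q. p \<in> ?Q2 \<and> q \<in> ?Q1}"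
        apply (rule CollectI)
        apply (rule exI[of _ "Rn S2 n x"])
        apply (rule exI[of _ "Rn S1 n y"])
        using rdata.Rn_in_Qs[OF r2 xs2 nx] rdata.Rn_in_Qs[OF r1 xs1 ny] by simp
      have "w \<in> ?P" unfolding w_def by (rule SigmaI[OF m1 m2])
      hence "w \<in> (\<Union>p\<in>k. ball p (e / 2))" using k(2) by (rule rev_subsetD)
      then obtain p where p1: "p \<in> k" and p2: "w \<in> ball p (e / 2)" by (rule UN_E)
      have p: "p \<in> k" "dist p w < e / 2" using p1 p2 by (auto simp: mem_ball)
      let ?i = "inverse (real (Suc n))"
      have a1: "norm (Rop S1 x - Rn S1 n x) \<le> ?i" using rdata.Rop_approx[OF r1, of x n] nx
        by (meson mult_left_le order_trans inverse_nonnegative_iff_nonnegative of_nat_0_le_iff)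
      have a2: "norm (Rop S2 y - Rn S2 n y) \<le> ?i" using rdata.Rop_approx[OF r2, of y n] ny
        by (meson mult_left_le order_trans inverse_nonnegative_iff_nonnegative of_nat_0_le_iff)
      have a3: "norm (Rop S2 x - Rn S2 n x) \<le> ?i" using rdata.Rop_approx[OF r2, of x n] nx
        by (meson mult_left_le order_trans inverse_nonnegative_iff_nonnegative of_nat_0_le_iff)
      have a4: "norm (Rop S1 y - Rn S1 n y) \<le> ?i" using rdata.Rop_approx[OF r1, of y n] ny
        by (meson mult_left_le order_trans inverse_nonnegative_iff_nonnegative of_nat_0_le_iff)
      have d1: "norm ((Rop S1 x - Rop S2 y) - (Rn S1 n x - Rn S2 n y)) \<le> 2 * ?i"
      proof -
        have eq: "(Rop S1 x - Rop S2 y) - (Rn S1 n x - Rn S2 n y) = (Rop S1 x - Rn S1 n x) - (Rop S2 y - Rn S2 n y)"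
          by (simp add: algebra_simps)
        have "norm ((Rop S1 x - Rop S2 y) - (Rn S1 n x - Rn S2 n y)) \<le> norm (Rop S1 x - Rn S1 n x) + norm (Rop S2 y - Rn S2 n y)"
          unfolding eq by (rule norm_triangle_ineq4)
        thus ?thesis using a1 a2 by linarith
      qed
      have d2: "norm ((Rop S2 x + Rop S1 y) - (Rn S2 n x + Rn S1 n y)) \<le> 2 * ?i"
      proof -
        have eq: "(Rop S2 x + Rop S1 y) - (Rn S2 n x + Rn S1 n y) = (Rop S2 x - Rn S2 n x) + (Rop S1 y - Rn S1 n y)"
          by (simp add: algebra_simps)
        have "norm ((Rop S2 x + Rop S1 y) - (Rn S2 n x + Rn S1 n y)) \<le> norm (Rop S2 x - Rn S2 n x) + norm (Rop S1 y - Rn S1 n y)"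
          unfolding eq by (rule norm_triangle_ineq)
        thus ?thesis using a3 a4 by linarith
      qed
      have "dist (T1 z) w = norm (T1 z - w)" by (simp add: dist_norm)
      also have "\<dots> \<le> norm ((Rop S1 x - Rop S2 y) - (Rn S1 n x - Rn S2 n y))
                     + norm ((Rop S2 x + Rop S1 y) - (Rn S2 n x + Rn S1 n y))"
        unfolding T1_def xy w_def by (simp add: norm_Pair_le)
      also have "\<dots> \<le> 4 * ?i" using d1 d2 by simp
      also have "\<dots> < e / 2" using n by simp
      finally have "dist (T1 z) w < e / 2" .
      hence "dist p (T1 z) < e" using p(2) dist_triangle[of p "T1 z" w] by (simp add: dist_commute)
      hence "T1 z \<in> ball p e" by (simp add: mem_ball)
      thus ?thesis using p(1) by (rule UN_I[rotated])
    qed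
    hence "T1 ` ?B \<subseteq> (\<Union>p\<in>k. ball p e)" by (rule image_subsetI)
    thus ?thesis using k(1) by blast
  qed
  have "compact (closure (T1 ` ?B))"
    unfolding compact_eq_totally_bounded
  proof (intro conjI allI impI)
    show "complete (closure (T1 ` ?B))" by (simp add: complete_eq_closed)
    fix e :: real assume e: "0 < e"
    obtain k where k: "finite k" "T1 ` ?B \<subseteq> (\<Union>p\<in>k. ball p (e / 2))" using tb[of "e / 2"] e by auto
    have "(\<Union>p\<in>k. ball p (e / 2)) \<subseteq> (\<Union>p\<in>k. cball p (e / 2))"
      by (intro UN_mono order_refl ball_subset_cball)
    hence "T1 ` ?B \<subseteq> (\<Union>p\<in>k. cball p (e / 2))" using k(2) by (rule subset_trans[rotated])
    moreover have "closed (\<Union>p\<in>k. cball p (e / 2))" using k(1) by (intro closed_UN) auto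
    ultimately have "closure (T1 ` ?B) \<subseteq> (\<Union>p\<in>k. cball p (e / 2))" by (rule closure_minimal)
    also have "\<dots> \<subseteq> (\<Union>p\<in>k. ball p e)"
    proof (intro UN_mono order_refl)
      fix p show "cball p (e / 2) \<subseteq> ball p e" using e by (auto simp: mem_cball mem_ball)
    qed
    finally show "\<exists>k. finite k \<and> closure (T1 ` ?B) \<subseteq> (\<Union>x\<in>k. ball x e)" using k(1) by blast
  qed
  thus ?thesis unfolding compact_on_def T1_def .
qed

theorem mainTheorem9:
  fixes T :: "'a::real_banach_lattice \<times> 'a \<Rightarrow> 'a \<times> 'a"
  assumes "T \<in> center"
    and "compact_on T (disj_compl (disj_compl norm_one_pos_atoms))"
  shows "\<exists>T1 T2. T1 \<in> center \<and> T2 \<in> center \<and> compact_on T1 UNIV \<and>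
           (\<forall>z. T z = T1 z + T2 z) \<and>
           (\<forall>z \<in> disj_compl (disj_compl norm_one_pos_atoms). T1 z = T z) \<and>
           (\<forall>z \<in> disj_compl norm_one_pos_atoms. T2 z = T z)"
proof -
  obtain S1 S2 where S1: "S1 \<in> real_center" and S2: "S2 \<in> real_center"
    and TS: "\<And>x y. T (x, y) = (S1 x - S2 y, S2 x + S1 y)"
    using assms(1) unfolding center_def by blast
  obtain c1 where c1: "cbound S1 c1" using real_center_cbound[OF S1] by blast
  obtain c2 where c2: "cbound S2 c2" using real_center_cbound[OF S2] by blast
  have r1: "rdata S1 c1" by (unfold_locales) (rule c1, rule center_fin(1)[OF TS c1 c2 assms(2)])
  have r2: "rdata S2 c2" by (unfold_locales) (rule c2, rule center_fin(2)[OF TS c1 c2 assms(2)])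
  define R1 where "R1 = Rop S1"
  define R2 where "R2 = Rop S2"
  define T1 where "T1 = (\<lambda>z::'a \<times> 'a. (R1 (fst z) - R2 (snd z), R2 (fst z) + R1 (snd z)))"
  define T2 where "T2 = (\<lambda>z. T z - T1 z)"
  have cR1: "cbound R1 c1" unfolding R1_def by (rule rdata.Rop_cbound[OF r1])
  have cR2: "cbound R2 c2" unfolding R2_def by (rule rdata.Rop_cbound[OF r2])
  show ?thesis
  proof (intro exI conjI)
    show "T1 \<in> center" unfolding center_def
      using cbound_real_center[OF cR1] cbound_real_center[OF cR2] unfolding T1_def by auto
    have D1: "(\<lambda>x. S1 x - R1 x) \<in> real_center" by (rule cbound_real_center[OF cbound_diff[OF c1 cR1]])
    have D2: "(\<lambda>x. S2 x - R2 x) \<in> real_center" by (rule cbound_real_center[OF cbound_diff[OF c2 cR2]])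
    have eq: "T2 (x, y) = ((S1 x - R1 x) - (S2 y - R2 y), (S2 x - R2 x) + (S1 y - R1 y))" for x y
      unfolding T2_def T1_def TS by (simp add: algebra_simps)
    show "T2 \<in> center" unfolding center_def
      apply (rule CollectI)
      apply (rule bexI[OF _ D1])
      apply (rule bexI[OF _ D2])
      using eq by simp
    show "compact_on T1 UNIV" unfolding T1_def R1_def R2_def by (rule T1_compact[OF r1 r2])
    show "\<forall>z. T z = T1 z + T2 z" unfolding T2_def by simp
    show "\<forall>z\<in>disj_compl (disj_compl norm_one_pos_atoms). T1 z = T z"
    proof
      fix z :: "'a \<times> 'a" assume z: "z \<in> disj_compl (disj_compl norm_one_pos_atoms)"
      obtain x y where xy: "z = (x, y)" by (cases z)
      have hx: "dj x u" if "\<And>a. is_atom a \<Longrightarrow> dj u a" for u using dc2(1)[OF z that] unfolding xy by simp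
      have hy: "dj y u" if "\<And>a. is_atom a \<Longrightarrow> dj u a" for u using dc2(2)[OF z that] unfolding xy by simp
      have "S1 x = R1 x" unfolding R1_def by (rule rdata.Rop_eq[OF r1 hx])
      moreover have "S2 x = R2 x" unfolding R2_def by (rule rdata.Rop_eq[OF r2 hx])
      moreover have "S1 y = R1 y" unfolding R1_def by (rule rdata.Rop_eq[OF r1 hy])
      moreover have "S2 y = R2 y" unfolding R2_def by (rule rdata.Rop_eq[OF r2 hy])
      ultimately show "T1 z = T z" unfolding T1_def xy TS by simp
    qed
    show "\<forall>z\<in>disj_compl norm_one_pos_atoms. T2 z = T z"
    proof
      fix z :: "'a \<times> 'a" assume z: "z \<in> disj_compl norm_one_pos_atoms"
      obtain x y where xy: "z = (x, y)" by (cases z)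
      have hx: "dj x a" if "is_atom a" for a using dc1(1)[OF z that] unfolding xy by simp
      have hy: "dj y a" if "is_atom a" for a using dc1(2)[OF z that] unfolding xy by simp
      have "R1 x = 0" unfolding R1_def by (rule rdata.Rop_zero_if_dj[OF r1 hx])
      moreover have "R2 x = 0" unfolding R2_def by (rule rdata.Rop_zero_if_dj[OF r2 hx])
      moreover have "R1 y = 0" unfolding R1_def by (rule rdata.Rop_zero_if_dj[OF r1 hy])
      moreover have "R2 y = 0" unfolding R2_def by (rule rdata.Rop_zero_if_dj[OF r2 hy])
      ultimately show "T2 z = T z" unfolding T2_def T1_def xy by (simp add: zero_prod_def)
    qed
  qed
qed


end
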